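(* Let $\mathcal{N}=\{1,\dots,N\}$ be a set of $N$ files with popularity distribution $p_1,\dots,p_N$, let there be $K$ users each with normalized cache size $M\ge 0$, and let $\mathcal{N}_1,\dots,\mathcal{N}_L$ be any partition of $\mathcal{N}$, with $N_\ell=|\mathcal{N}_\ell|$. For each $\ell$, let $\mathsf{K}_\ell$ be the (random) number of users whose demand lies in $\mathcal{N}_\ell$. Then \[ R^\star(M,\mathcal{N},K)\;\le\;\min_{\{M_\ell\}:\,M_\ell\ge 0,\ \sum_{\ell} M_\ell=M}\ \sum_{\ell=1}^L \mathbb{E}\bigl(R(M_\ell,N_\ell,\mathsf{K}_\ell)\bigr)\;\le\;\sum_{\ell=1}^L \mathbb{E}\bigl(R(M/L,N_\ell,\mathsf{K}_\ell)\bigr), \] where the expectations are over the random demands.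
   Context: Caching problem: a server holds $N$ files, each of $F$ bits, and is connected through a shared error-free link to $K$ users, each with a cache of $MF$ bits. In the placement phase (before demands are known), each user stores an arbitrary function of the $N$ files of at most $MF$ bits. In the delivery phase, each user $k$ independently requests a file $\mathsf{d}_k$, where $\Pr(\mathsf{d}_k=n)=p_n$; the server, knowing the demands, sends a message over the shared link, and each user must reconstruct its requested file from this message and its cache. The rate of a scheme for a demand vector is the message length divided by $F$; the expected rate is its expectation over the demands. The optimal expected rate $R^\star(M,\mathcal{N},K)$ is the infimum of expected rates achievable (with vanishing error probability, for all sufficiently large $F$) over all placement and delivery schemes. Thus $\mathsf{K}_\ell$ is Binomial$(K,\sum_{n\in\mathcal{N}_\ell}p_n)$. The function $R$ is defined for real $M\ge 0$ and integers $N\ge1$, $K\ge 0$ by $R(M,N,K)=(1-M/N)\min\{\tfrac{N}{M}(1-(1-M/N)^K),\,N\}$ for $M\in(0,N]$ (equivalently $K(1-M/N)\min\{\frac{N}{KM}(1-(1-M/N)^K),\frac{N}{K}\}$ when $K\ge1$), $R(0,N,K)=\min\{N,K\}$, and $R(M,N,K)=0$ for $M>N$. *)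

theory Defs
  imports Complex_Main "HOL-Library.FuncSet"
begin

text \<open>Files are indexed by 0..N-1, users by 0..K-1. A file is a bit string (bool list).\<close>

definition file_tuples :: "nat \<Rightarrow> nat \<Rightarrow> (nat \<Rightarrow> bool list) set" where
  "file_tuples N F = PiE {..<N} (\<lambda>_. {xs. length xs = F})"

definition demand_vectors :: "nat \<Rightarrow> nat \<Rightarrow> (nat \<Rightarrow> nat) set" where
  "demand_vectors N K = PiE {..<K} (\<lambda>_. {..<N})"

definition demand_prob :: "(nat \<Rightarrow> real) \<Rightarrow> nat \<Rightarrow> (nat \<Rightarrow> nat) \<Rightarrow> real" where
  "demand_prob p K d = (\<Prod>k<K. p (d k))"

text \<open>A caching scheme: placement (cache content of user k as function of the files),
  delivery encoder (message as function of demand vector and files),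
  and decoders (user k, demand vector, message, own cache content \<mapsto> estimate of its file).\<close>
record scheme =
  cache :: "nat \<Rightarrow> (nat \<Rightarrow> bool list) \<Rightarrow> bool list"
  enc   :: "(nat \<Rightarrow> nat) \<Rightarrow> (nat \<Rightarrow> bool list) \<Rightarrow> bool list"
  dec   :: "nat \<Rightarrow> (nat \<Rightarrow> nat) \<Rightarrow> bool list \<Rightarrow> bool list \<Rightarrow> bool list"

definition cache_ok :: "real \<Rightarrow> nat \<Rightarrow> nat \<Rightarrow> nat \<Rightarrow> scheme \<Rightarrow> bool" where
  "cache_ok M N K F S \<longleftrightarrow>
     (\<forall>k<K. \<forall>W\<in>file_tuples N F. real (length (cache S k W)) \<le> M * real F)"

definition msg_len :: "nat \<Rightarrow> nat \<Rightarrow> scheme \<Rightarrow> (nat \<Rightarrow> nat) \<Rightarrow> nat" where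
  "msg_len N F S d = Max ((\<lambda>W. length (enc S d W)) ` file_tuples N F)"

text \<open>Error probability for demand d, files independent and uniformly distributed.\<close>
definition err_prob :: "nat \<Rightarrow> nat \<Rightarrow> nat \<Rightarrow> scheme \<Rightarrow> (nat \<Rightarrow> nat) \<Rightarrow> real" where
  "err_prob N K F S d =
     real (card {W \<in> file_tuples N F.
                 \<exists>k<K. dec S k d (enc S d W) (cache S k W) \<noteq> W (d k)})
     / real (card (file_tuples N F))"

definition expected_rate :: "(nat \<Rightarrow> real) \<Rightarrow> nat \<Rightarrow> nat \<Rightarrow> nat \<Rightarrow> scheme \<Rightarrow> real" where
  "expected_rate p N K F S =
     (\<Sum>d\<in>demand_vectors N K. demand_prob p K d * (real (msg_len N F S d) / real F))"

definition achievable :: "(nat \<Rightarrow> real) \<Rightarrow> real \<Rightarrow> nat \<Rightarrow> nat \<Rightarrow> real \<Rightarrow> bool" where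
  "achievable p M N K r \<longleftrightarrow>
     (\<forall>\<epsilon>>0. \<exists>F0. \<forall>F\<ge>F0. \<exists>S. cache_ok M N K F S
         \<and> (\<forall>d\<in>demand_vectors N K. err_prob N K F S d \<le> \<epsilon>)
         \<and> expected_rate p N K F S \<le> r + \<epsilon>)"

definition R_star :: "(nat \<Rightarrow> real) \<Rightarrow> real \<Rightarrow> nat \<Rightarrow> nat \<Rightarrow> real" where
  "R_star p M N K = Inf {r. achievable p M N K r}"

definition Rfun :: "real \<Rightarrow> nat \<Rightarrow> nat \<Rightarrow> real" where
  "Rfun M N K =
     (if M = 0 then real (min N K)
      else if M > real N then 0
      else (1 - M / real N) * min ((real N / M) * (1 - (1 - M / real N) ^ K)) (real N))"

definition exp_R_class :: "(nat \<Rightarrow> real) \<Rightarrow> nat \<Rightarrow> nat \<Rightarrow> nat set \<Rightarrow> real \<Rightarrow> real" where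
  "exp_R_class p N K A Ml =
     (\<Sum>d\<in>demand_vectors N K.
        demand_prob p K d * Rfun Ml (card A) (card {k\<in>{..<K}. d k \<in> A}))"

end

theory Submission
  imports Defs
begin

definition enum_of :: "'a set \<Rightarrow> 'a list" where
  "enum_of A = (SOME L. distinct L \<and> set L = A)"

lemma enum_of: "finite A \<Longrightarrow> distinct (enum_of A) \<and> set (enum_of A) = A"
proof -
  assume "finite A"
  from finite_distinct_list[OF this] obtain L where "distinct L \<and> set L = A" by blast
  then show ?thesis unfolding enum_of_def by (rule someI)
qed

definition tab :: "('a \<Rightarrow> 'b) \<Rightarrow> 'a set \<Rightarrow> 'b list" where
  "tab f A = map f (enum_of A)"

lemma length_tab: "finite A \<Longrightarrow> length (tab f A) = card A"
  unfolding tab_def using enum_of[of A] by (metis distinct_card length_map)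

lemma tab_eq: "finite A \<Longrightarrow> tab f A = tab g A \<longleftrightarrow> (\<forall>a\<in>A. f a = g a)"
  unfolding tab_def using enum_of[of A] by (simp add: map_eq_conv)

lemma greedy_coloring:
  fixes Y :: "'y set"
  assumes "finite Y" and sym: "\<And>y y'. R y y' \<Longrightarrow> R y' y" and irr: "\<And>y. \<not> R y y"
    and "\<forall>y\<in>Y. card {y'\<in>Y. R y y'} < m"
  shows "\<exists>c. (\<forall>y\<in>Y. c y < m) \<and> (\<forall>y\<in>Y. \<forall>y'\<in>Y. R y y' \<longrightarrow> c y \<noteq> c y')"
  using assms(1,4)
proof (induction Y rule: finite_induct)
  case empty
  then show ?case by auto
next
  case (insert a Y)
  have "\<forall>y\<in>Y. card {y'\<in>Y. R y y'} < m"
  proof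
    fix y assume "y \<in> Y"
    have "card {y'\<in>Y. R y y'} \<le> card {y'\<in>insert a Y. R y y'}"
      by (rule card_mono) (use insert in auto)
    then show "card {y'\<in>Y. R y y'} < m" using insert \<open>y\<in>Y\<close> by fastforce
  qed
  then obtain c where c: "\<forall>y\<in>Y. c y < m" "\<forall>y\<in>Y. \<forall>y'\<in>Y. R y y' \<longrightarrow> c y \<noteq> c y'"
    using insert by blast
  define Nb where "Nb = {y'\<in>Y. R a y'}"
  have "card Nb \<le> card {y'\<in>insert a Y. R a y'}"
    unfolding Nb_def by (rule card_mono) (use insert in auto)
  then have "card Nb < m" using insert by auto
  then have "card (c ` Nb) < card {..<m}" using card_image_le[of Nb c] insert
    unfolding Nb_def by fastforce
  have "\<not> {..<m} \<subseteq> c ` Nb"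
  proof
    assume "{..<m} \<subseteq> c ` Nb"
    then have "card {..<m} \<le> card (c ` Nb)" using insert(1) unfolding Nb_def
      by (intro card_mono) auto
    then show False using \<open>card (c ` Nb) < card {..<m}\<close> by simp
  qed
  then obtain col where col: "col < m" "col \<notin> c ` Nb" by auto
  define c' where "c' = c(a := col)"
  show ?case
  proof (intro exI[of _ c'] conjI ballI impI)
    fix y assume "y \<in> insert a Y" then show "c' y < m" using c col unfolding c'_def by auto
  next
    fix y y' assume "y \<in> insert a Y" "y' \<in> insert a Y" "R y y'"
    show "c' y \<noteq> c' y'"
    proof (cases "y = a")
      case True
      then have "y' \<noteq> a" using irr \<open>R y y'\<close> by auto
      then have "y' \<in> Nb" using True \<open>R y y'\<close> \<open>y' \<in> insert a Y\<close> unfolding Nb_def by auto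
      then show ?thesis using True \<open>y' \<noteq> a\<close> col unfolding c'_def by auto
    next
      case False
      show ?thesis
      proof (cases "y' = a")
        case True
        then have "y \<in> Nb" using False \<open>R y y'\<close> sym \<open>y \<in> insert a Y\<close> unfolding Nb_def by auto
        then show ?thesis using True False col unfolding c'_def by auto
      next
        case False2: False
        then show ?thesis using False c \<open>R y y'\<close> \<open>y \<in> insert a Y\<close> \<open>y' \<in> insert a Y\<close>
          unfolding c'_def by auto
      qed
    qed
  qed
qed

lemma bits_inj:
  fixes a b :: nat
  assumes "a < 2^w" "b < 2^w" "\<forall>j<w. bit a j = bit b j"
  shows "a = b"
proof -
  have "take_bit w a = a" "take_bit w b = b" using assms by (auto simp: take_bit_nat_eq_self_iff)
  then have "bit a n = bit b n" for n using assms(3)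
    by (metis bit_take_bit_iff)
  then show ?thesis by (simp add: bit_eq_iff)
qed

lemma block_encoding:
  fixes X :: "'x set" and B :: "'b set" and pr :: "'b \<Rightarrow> 'x \<Rightarrow> 'y"
  assumes "finite X" "finite B"
    and sym: "\<And>b y y'. b \<in> B \<Longrightarrow> R b y y' \<Longrightarrow> R b y' y"
    and irr: "\<And>b y. b \<in> B \<Longrightarrow> \<not> R b y y"
    and deg: "\<And>b y. b \<in> B \<Longrightarrow> y \<in> pr b ` X \<Longrightarrow> card {y'\<in>pr b ` X. R b y y'} < 2 ^ w b"
  shows "\<exists>E::'x \<Rightarrow> bool list. (\<forall>x\<in>X. length (E x) = (\<Sum>b\<in>B. w b)) \<and>
             (\<forall>x\<in>X. \<forall>x'\<in>X. E x = E x' \<longrightarrow> (\<forall>b\<in>B. \<not> R b (pr b x) (pr b x')))"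
proof -
  have "\<forall>b\<in>B. \<exists>c. (\<forall>y\<in>pr b ` X. (c y::nat) < 2 ^ w b) \<and>
          (\<forall>y\<in>pr b ` X. \<forall>y'\<in>pr b ` X. R b y y' \<longrightarrow> c y \<noteq> c y')"
  proof
    fix b assume "b \<in> B"
    show "\<exists>c. (\<forall>y\<in>pr b ` X. (c y::nat) < 2 ^ w b) \<and>
          (\<forall>y\<in>pr b ` X. \<forall>y'\<in>pr b ` X. R b y y' \<longrightarrow> c y \<noteq> c y')"
    proof (rule greedy_coloring)
      show "finite (pr b ` X)" using assms(1) by simp
      show "R b y y' \<Longrightarrow> R b y' y" for y y' using sym[OF \<open>b\<in>B\<close>] .
      show "\<not> R b y y" for y using irr[OF \<open>b\<in>B\<close>] .
      show "\<forall>y\<in>pr b ` X. card {y' \<in> pr b ` X. R b y y'} < 2 ^ w b"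
        using deg[OF \<open>b\<in>B\<close>] by blast
    qed
  qed
  from bchoice[OF this] obtain c where c0: "\<forall>b\<in>B. (\<forall>y\<in>pr b ` X. (c b y::nat) < 2 ^ w b) \<and>
          (\<forall>y\<in>pr b ` X. \<forall>y'\<in>pr b ` X. R b y y' \<longrightarrow> c b y \<noteq> c b y')" ..
  have c: "\<And>b. b \<in> B \<Longrightarrow> (\<forall>y\<in>pr b ` X. (c b y::nat) < 2 ^ w b) \<and>
          (\<forall>y\<in>pr b ` X. \<forall>y'\<in>pr b ` X. R b y y' \<longrightarrow> c b y \<noteq> c b y')"
    using c0 by (rule bspec)
  define E where "E x = tab (\<lambda>(b,j). bit (c b (pr b x)) j) (Sigma B (\<lambda>b. {..<w b}))" for x
  have fin: "finite (Sigma B (\<lambda>b. {..<w b}))" using assms(2) by auto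
  show ?thesis
  proof (intro exI[of _ E] conjI ballI impI)
    fix x assume "x \<in> X"
    show "length (E x) = (\<Sum>b\<in>B. w b)"
      unfolding E_def length_tab[OF fin] by (subst card_SigmaI[OF assms(2)]) auto
  next
    fix x x' b assume xx: "x \<in> X" "x' \<in> X" "E x = E x'" "b \<in> B"
    have "\<forall>a\<in>Sigma B (\<lambda>b. {..<w b}). (\<lambda>(b,j). bit (c b (pr b x)) j) a = (\<lambda>(b,j). bit (c b (pr b x')) j) a"
      using xx(3) unfolding E_def by (subst tab_eq[OF fin, symmetric])
    then have "\<forall>j<w b. bit (c b (pr b x)) j = bit (c b (pr b x')) j"
      using xx(4) by fastforce
    then have "c b (pr b x) = c b (pr b x')"
    proof -
      assume bb: "\<forall>j<w b. bit (c b (pr b x)) j = bit (c b (pr b x')) j"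
      have "c b (pr b x) < 2 ^ w b" "c b (pr b x') < 2 ^ w b" using c[OF xx(4)] xx(1,2) by auto
      then show ?thesis using bb by (rule bits_inj)
    qed
    moreover have "pr b x \<in> pr b ` X" "pr b x' \<in> pr b ` X" using xx(1,2) by auto
    ultimately show "\<not> R b (pr b x) (pr b x')" using c[OF xx(4)] by metis
  qed
qed


definition wt :: "real \<Rightarrow> nat \<Rightarrow> nat set \<Rightarrow> real" where
  "wt x K T = x ^ card T * (1 - x) ^ (K - card T)"

lemma wt_prod: "T \<subseteq> {..<K} \<Longrightarrow> wt x K T = (\<Prod>a\<in>T. x) * (\<Prod>a\<in>{..<K} - T. 1 - x)"
  unfolding wt_def by (simp add: card_Diff_subset finite_subset)

lemma wt_nonneg: "0 \<le> x \<Longrightarrow> x \<le> 1 \<Longrightarrow> 0 \<le> wt x K T"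
  unfolding wt_def by simp

lemma sum_wt: "(\<Sum>T\<in>Pow {..<K}. wt x K T) = 1"
proof -
  have "(\<Sum>T\<in>Pow {..<K}. wt x K T) = (\<Prod>a\<in>{..<K}. x + (1 - x))"
    by (subst prod_add) (auto intro!: sum.cong simp: wt_prod)
  then show ?thesis by simp
qed

lemma sum_wt_mem:
  assumes "k < K"
  shows "(\<Sum>T\<in>{T\<in>Pow {..<K}. k \<in> T}. wt x K T) = x"
proof -
  define g where "g a = (if a = k then 0 else 1 - x)" for a :: nat
  have "(\<Prod>a\<in>{..<K}. x + g a) = (\<Sum>T\<in>Pow {..<K}. (\<Prod>a\<in>T. x) * (\<Prod>a\<in>{..<K} - T. g a))"
    by (rule prod_add) simp
  also have "\<dots> = (\<Sum>T\<in>Pow {..<K}. if k \<in> T then wt x K T else 0)"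
  proof (rule sum.cong[OF refl])
    fix T assume T: "T \<in> Pow {..<K}"
    show "(\<Prod>a\<in>T. x) * (\<Prod>a\<in>{..<K} - T. g a) = (if k \<in> T then wt x K T else 0)"
    proof (cases "k \<in> T")
      case True
      then have "(\<Prod>a\<in>{..<K} - T. g a) = (\<Prod>a\<in>{..<K} - T. 1 - x)"
        unfolding g_def by (intro prod.cong) auto
      then show ?thesis using True T by (simp add: wt_prod)
    next
      case False
      then have "(\<Prod>a\<in>{..<K} - T. g a) = 0"
        using assms T unfolding g_def by (intro prod_zero) auto
      then show ?thesis using False by simp
    qed
  qed
  also have "\<dots> = (\<Sum>T\<in>{T\<in>Pow {..<K}. k \<in> T}. wt x K T)"
    by (rule sum.inter_filter[symmetric]) simp
  finally have "(\<Sum>T\<in>{T\<in>Pow {..<K}. k \<in> T}. wt x K T) = (\<Prod>a\<in>{..<K}. x + g a)" by simp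
  also have "\<dots> = (x + g k) * (\<Prod>a\<in>{..<K} - {k}. x + g a)"
    using assms by (intro prod.remove) auto
  also have "\<dots> = x * (\<Prod>a\<in>{..<K} - {k}. x + g a)" by (simp add: g_def)
  also have "(\<Prod>a\<in>{..<K} - {k}. x + g a) = 1"
    unfolding g_def by (intro prod.neutral) auto
  finally show ?thesis by simp
qed

lemma sum_wt_disj:
  assumes "S \<subseteq> {..<K}"
  shows "(\<Sum>T\<in>{T\<in>Pow {..<K}. T \<inter> S = {}}. wt x K T) = (1 - x) ^ card S"
proof -
  define f where "f a = (if a \<in> S then 0 else x)" for a :: nat
  have "(\<Prod>a\<in>{..<K}. f a + (1 - x)) = (\<Sum>T\<in>Pow {..<K}. (\<Prod>a\<in>T. f a) * (\<Prod>a\<in>{..<K} - T. 1 - x))"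
    by (rule prod_add) simp
  also have "\<dots> = (\<Sum>T\<in>Pow {..<K}. if T \<inter> S = {} then wt x K T else 0)"
  proof (rule sum.cong[OF refl])
    fix T assume T: "T \<in> Pow {..<K}"
    show "(\<Prod>a\<in>T. f a) * (\<Prod>a\<in>{..<K} - T. 1 - x) = (if T \<inter> S = {} then wt x K T else 0)"
    proof (cases "T \<inter> S = {}")
      case True
      then have "(\<Prod>a\<in>T. f a) = (\<Prod>a\<in>T. x)"
        unfolding f_def by (intro prod.cong) auto
      then show ?thesis using True T by (simp add: wt_prod)
    next
      case False
      then obtain k where "k \<in> T" "k \<in> S" by auto
      then have "(\<Prod>a\<in>T. f a) = 0"
        using T \<open>k \<in> T\<close> \<open>k \<in> S\<close> unfolding f_def by (intro prod_zero) (auto intro: finite_subset)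
      then show ?thesis using False by simp
    qed
  qed
  also have "\<dots> = (\<Sum>T\<in>{T\<in>Pow {..<K}. T \<inter> S = {}}. wt x K T)"
    by (rule sum.inter_filter[symmetric]) simp
  finally have "(\<Sum>T\<in>{T\<in>Pow {..<K}. T \<inter> S = {}}. wt x K T) = (\<Prod>a\<in>{..<K}. f a + (1 - x))" by simp
  also have "\<dots> = (\<Prod>a\<in>S. 1 - x) * (\<Prod>a\<in>{..<K} - S. 1)"
  proof -
    have "{..<K} = S \<union> ({..<K} - S)" using assms by auto
    then have "(\<Prod>a\<in>{..<K}. f a + (1 - x)) = (\<Prod>a\<in>S. f a + (1 - x)) * (\<Prod>a\<in>{..<K} - S. f a + (1 - x))"
      by (metis Diff_disjoint finite_Diff finite_lessThan finite_subset assms prod.union_disjoint)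
    also have "\<dots> = (\<Prod>a\<in>S. 1 - x) * (\<Prod>a\<in>{..<K} - S. 1)"
      unfolding f_def by (intro arg_cong2[where f="(*)"] prod.cong) auto
    finally show ?thesis .
  qed
  finally show ?thesis by simp
qed

lemma exists_disjoint_sets:
  fixes a :: "'j \<Rightarrow> nat"
  assumes "finite J"
  shows "\<exists>I. (\<forall>j\<in>J. I j \<subseteq> {..<(\<Sum>j\<in>J. a j)} \<and> card (I j) = a j) \<and>
             (\<forall>i\<in>J. \<forall>j\<in>J. i \<noteq> j \<longrightarrow> I i \<inter> I j = {})"
  using assms
proof (induction J rule: finite_induct)
  case empty then show ?case by auto
next
  case (insert j J)
  then obtain I where I: "\<forall>j\<in>J. I j \<subseteq> {..<(\<Sum>j\<in>J. a j)} \<and> card (I j) = a j"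
     "\<forall>i\<in>J. \<forall>j\<in>J. i \<noteq> j \<longrightarrow> I i \<inter> I j = {}" by blast
  define s where "s = (\<Sum>j\<in>J. a j)"
  define I' where "I' = I(j := {s..<s + a j})"
  have sum: "(\<Sum>j\<in>insert j J. a j) = s + a j" using insert unfolding s_def by simp
  show ?case
  proof (intro exI[of _ I'] conjI ballI impI)
    fix i assume "i \<in> insert j J"
    then show "card (I' i) = a i"
      using I unfolding I'_def sum s_def by auto
    show "I' i \<subseteq> {..<(\<Sum>j\<in>insert j J. a j)}"
    proof (cases "i = j")
      case True then show ?thesis unfolding I'_def sum by auto
    next
      case False
      then have "I' i \<subseteq> {..<s}" using I \<open>i \<in> insert j J\<close> unfolding I'_def s_def by auto
      then show ?thesis unfolding sum by auto
    qed
  next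
    fix i i' assume "i \<in> insert j J" "i' \<in> insert j J" "i \<noteq> i'"
    have sub: "I i \<subseteq> {..<s}" if "i \<in> J" for i using I that unfolding s_def by auto
    show "I' i \<inter> I' i' = {}"
    proof (cases "i = j \<or> i' = j")
      case True
      have d: "{s..<s + a j} \<inter> I t = {}" if "t \<in> J" for t
        using sub[OF that] by auto
      show ?thesis
      proof (cases "i = j")
        case True
        then have "i' \<in> J" using \<open>i \<noteq> i'\<close> \<open>i' \<in> insert j J\<close> by auto
        then show ?thesis using d[of i'] True \<open>i \<noteq> i'\<close> unfolding I'_def by auto
      next
        case False
        then have "i \<in> J" "i' = j" using \<open>i = j \<or> i' = j\<close> \<open>i \<in> insert j J\<close> by auto
        then show ?thesis using d[of i] False unfolding I'_def by auto
      qed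
    next
      case False
      then show ?thesis using I(2) \<open>i \<noteq> i'\<close> \<open>i \<in> insert j J\<close> \<open>i' \<in> insert j J\<close>
        unfolding I'_def by auto
    qed
  qed
qed


definition goodI :: "nat \<Rightarrow> real \<Rightarrow> nat \<Rightarrow> (nat set \<Rightarrow> nat set) \<Rightarrow> bool" where
  "goodI K x F I \<longleftrightarrow> (\<forall>T\<in>Pow {..<K}. I T \<subseteq> {..<F}) \<and>
     (\<forall>T\<in>Pow {..<K}. \<forall>T'\<in>Pow {..<K}. T \<noteq> T' \<longrightarrow> I T \<inter> I T' = {}) \<and>
     (\<forall>T\<in>Pow {..<K}. T \<noteq> {} \<longrightarrow> card (I T) = nat \<lfloor>wt x K T * real F\<rfloor>) \<and>
     (\<Union>T\<in>Pow {..<K}. I T) = {..<F}"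

lemma card_Pow_lt: "card (Pow {..<K::nat}) = 2 ^ K"
  by (simp add: card_Pow)

lemma goodI_ex:
  assumes "0 \<le> x" "x \<le> 1"
  shows "\<exists>I. goodI K x F I"
proof -
  define J where "J = Pow {..<K} - {{}}"
  define a where "a T = nat \<lfloor>wt x K T * real F\<rfloor>" for T
  have finJ: "finite J" unfolding J_def by simp
  have "real (\<Sum>T\<in>J. a T) = (\<Sum>T\<in>J. real (a T))" by simp
  also have "\<dots> \<le> (\<Sum>T\<in>J. wt x K T * real F)"
  proof (rule sum_mono)
    fix T assume "T \<in> J"
    have "0 \<le> wt x K T * real F" using wt_nonneg[OF assms] by simp
    then show "real (a T) \<le> wt x K T * real F" unfolding a_def by linarith
  qed
  also have "\<dots> \<le> (\<Sum>T\<in>Pow {..<K}. wt x K T * real F)"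
    unfolding J_def by (rule sum_mono2) (use wt_nonneg[OF assms] in auto)
  also have "\<dots> = real F" using sum_wt[where x=x and K=K] by (simp add: sum_distrib_right[symmetric])
  finally have sumF: "(\<Sum>T\<in>J. a T) \<le> F" by linarith
  obtain I0 where I0: "\<forall>j\<in>J. I0 j \<subseteq> {..<(\<Sum>j\<in>J. a j)} \<and> card (I0 j) = a j"
     "\<forall>i\<in>J. \<forall>j\<in>J. i \<noteq> j \<longrightarrow> I0 i \<inter> I0 j = {}"
    using exists_disjoint_sets[OF finJ, of a] by blast
  define I where "I T = (if T = {} then {..<F} - (\<Union>T\<in>J. I0 T) else I0 T)" for T
  have sub: "I0 T \<subseteq> {..<F}" if "T \<in> J" for T using I0(1) that sumF by fastforce
  show ?thesis unfolding goodI_def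
  proof (intro exI[of _ I] conjI ballI impI)
    fix T assume "T \<in> Pow {..<K}"
    then show "I T \<subseteq> {..<F}" using sub unfolding I_def J_def by auto
  next
    fix T T' assume T: "T \<in> Pow {..<K}" "T' \<in> Pow {..<K}" "T \<noteq> T'"
    show "I T \<inter> I T' = {}"
    proof (cases "T = {} \<or> T' = {}")
      case True
      then show ?thesis using T unfolding I_def J_def by auto
    next
      case False
      then show ?thesis using T I0(2) unfolding I_def J_def by auto
    qed
  next
    fix T assume "T \<in> Pow {..<K}" "T \<noteq> {}"
    then show "card (I T) = nat \<lfloor>wt x K T * real F\<rfloor>" using I0(1) unfolding I_def J_def a_def by auto
  next
    show "(\<Union>T\<in>Pow {..<K}. I T) = {..<F}"
    proof
      show "(\<Union>T\<in>Pow {..<K}. I T) \<subseteq> {..<F}" using sub unfolding I_def J_def by auto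
      show "{..<F} \<subseteq> (\<Union>T\<in>Pow {..<K}. I T)"
      proof
        fix i assume "i \<in> {..<F}"
        show "i \<in> (\<Union>T\<in>Pow {..<K}. I T)"
        proof (cases "i \<in> (\<Union>T\<in>J. I0 T)")
          case True
          then obtain T where "T \<in> J" "i \<in> I0 T" by auto
          then show ?thesis unfolding I_def J_def by (intro UN_I[of T]) auto
        next
          case False
          then show ?thesis using \<open>i \<in> {..<F}\<close> unfolding I_def by (intro UN_I[of "{}"]) auto
        qed
      qed
    qed
  qed
qed

context
  fixes K F :: nat and x :: real and I :: "nat set \<Rightarrow> nat set"
  assumes gI: "goodI K x F I" and x0: "0 \<le> x" and x1: "x \<le> 1"
begin

lemma gI_sub: "T \<in> Pow {..<K} \<Longrightarrow> I T \<subseteq> {..<F}"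
  using gI unfolding goodI_def by auto

lemma gI_fin: "T \<in> Pow {..<K} \<Longrightarrow> finite (I T)"
  using gI_sub finite_subset by blast

lemma gI_disj: "T \<in> Pow {..<K} \<Longrightarrow> T' \<in> Pow {..<K} \<Longrightarrow> T \<noteq> T' \<Longrightarrow> I T \<inter> I T' = {}"
  using gI unfolding goodI_def by auto

lemma gI_card: "T \<in> Pow {..<K} \<Longrightarrow> T \<noteq> {} \<Longrightarrow> card (I T) = nat \<lfloor>wt x K T * real F\<rfloor>"
  using gI unfolding goodI_def by auto

lemma gI_cover: "(\<Union>T\<in>Pow {..<K}. I T) = {..<F}"
  using gI unfolding goodI_def by auto

lemma nat_floor_bounds:
  fixes y :: real assumes "0 \<le> y" shows "real (nat \<lfloor>y\<rfloor>) \<le> y" "real (nat \<lfloor>y\<rfloor>) \<ge> y - 1"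
proof -
  have "real (nat \<lfloor>y\<rfloor>) = real_of_int \<lfloor>y\<rfloor>" using assms by (simp add: of_nat_nat)
  then show "real (nat \<lfloor>y\<rfloor>) \<le> y" "real (nat \<lfloor>y\<rfloor>) \<ge> y - 1" by linarith+
qed

lemma gI_card_le_ne: "T \<in> Pow {..<K} \<Longrightarrow> T \<noteq> {} \<Longrightarrow> real (card (I T)) \<le> wt x K T * real F"
  using gI_card nat_floor_bounds(1)[of "wt x K T * real F"] wt_nonneg[OF x0 x1, of K T] by simp

lemma gI_card_ge_ne: "T \<in> Pow {..<K} \<Longrightarrow> T \<noteq> {} \<Longrightarrow> real (card (I T)) \<ge> wt x K T * real F - 1"
  using gI_card nat_floor_bounds(2)[of "wt x K T * real F"] wt_nonneg[OF x0 x1, of K T] by simp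

lemma gI_card_sum: "card (\<Union>T\<in>A. I T) = (\<Sum>T\<in>A. card (I T))" if "A \<subseteq> Pow {..<K}"
proof -
  have "finite A" using that finite_subset by blast
  moreover have "\<forall>T\<in>A. finite (I T)" using that gI_fin by blast
  moreover have "\<forall>T\<in>A. \<forall>T'\<in>A. T \<noteq> T' \<longrightarrow> I T \<inter> I T' = {}"
    using that gI_disj by (meson subsetD)
  ultimately show ?thesis by (rule card_UN_disjoint)
qed

lemma gI_card_le: 
  assumes "T \<in> Pow {..<K}"
  shows "real (card (I T)) \<le> wt x K T * real F + 2 ^ K"
proof (cases "T = {}")
  case False
  moreover have "(0::real) \<le> 2 ^ K" by simp
  ultimately show ?thesis using gI_card_le_ne[OF assms] by linarith
next
  case True
  define J where "J = Pow {..<K} - {{}}"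
  have "F = card (\<Union>T\<in>Pow {..<K}. I T)" using gI_cover by simp
  also have "\<dots> = (\<Sum>T\<in>Pow {..<K}. card (I T))" by (rule gI_card_sum) simp
  also have "\<dots> = card (I {}) + (\<Sum>T\<in>J. card (I T))"
    unfolding J_def by (subst sum.remove[of _ "{}"]) auto
  finally have eq: "real F = real (card (I {})) + (\<Sum>T\<in>J. real (card (I T)))" by simp
  have "(\<Sum>T\<in>J. real (card (I T))) \<ge> (\<Sum>T\<in>J. wt x K T * real F - 1)"
    by (rule sum_mono) (use gI_card_ge_ne in \<open>auto simp: J_def\<close>)
  also have "(\<Sum>T\<in>J. wt x K T * real F - 1) = (\<Sum>T\<in>J. wt x K T) * real F - card J"
    by (simp add: sum_subtractf sum_distrib_right)
  also have "(\<Sum>T\<in>J. wt x K T) = 1 - wt x K {}"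
    using sum_wt[where x=x and K=K] unfolding J_def by (subst (asm) sum.remove[of _ "{}"]) auto
  finally have i1: "(\<Sum>T\<in>J. real (card (I T))) \<ge> (1 - wt x K {}) * real F - real (card J)" .
  have "card J \<le> card (Pow {..<K})" unfolding J_def by (rule card_mono) auto
  then have "real (card J) \<le> 2 ^ K" unfolding card_Pow_lt
    by (metis of_nat_le_iff of_nat_numeral of_nat_power)
  with i1 have "(\<Sum>T\<in>J. real (card (I T))) \<ge> (1 - wt x K {}) * real F - 2 ^ K" by linarith
  then show ?thesis using eq True by (simp add: algebra_simps)
qed

definition Cset :: "nat \<Rightarrow> nat set" where
  "Cset k = (\<Union>T\<in>{T\<in>Pow {..<K}. k \<in> T}. I T)"

lemma Cset_sub: "Cset k \<subseteq> {..<F}"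
  unfolding Cset_def using gI_sub by auto

lemma Cset_card:
  assumes "k < K"
  shows "real (card (Cset k)) \<le> x * real F" "real (card (Cset k)) \<ge> x * real F - 2 ^ K"
proof -
  define A where "A = {T\<in>Pow {..<K}. k \<in> T}"
  have c: "card (Cset k) = (\<Sum>T\<in>A. card (I T))" unfolding Cset_def A_def
    by (rule gI_card_sum) auto
  have ne: "T \<in> A \<Longrightarrow> T \<noteq> {}" for T unfolding A_def by auto
  have "real (card (Cset k)) = (\<Sum>T\<in>A. real (card (I T)))" using c by simp
  also have "\<dots> \<le> (\<Sum>T\<in>A. wt x K T * real F)"
    by (rule sum_mono) (use gI_card_le_ne ne in \<open>auto simp: A_def\<close>)
  also have "\<dots> = x * real F" using sum_wt_mem[OF assms, where x=x]
    unfolding A_def by (simp add: sum_distrib_right[symmetric])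
  finally show "real (card (Cset k)) \<le> x * real F" .
  have "real (card (Cset k)) = (\<Sum>T\<in>A. real (card (I T)))" using c by simp
  also have "\<dots> \<ge> (\<Sum>T\<in>A. wt x K T * real F - 1)"
    by (rule sum_mono) (use gI_card_ge_ne ne in \<open>auto simp: A_def\<close>)
  finally have "real (card (Cset k)) \<ge> (\<Sum>T\<in>A. wt x K T) * real F - card A"
    by (simp add: sum_subtractf sum_distrib_right)
  moreover have "(\<Sum>T\<in>A. wt x K T) = x" using sum_wt_mem[OF assms] unfolding A_def .
  ultimately have i2: "x * real F - real (card A) \<le> real (card (Cset k))" by simp
  have "card A \<le> card (Pow {..<K})" unfolding A_def by (rule card_mono) auto
  then have "real (card A) \<le> 2 ^ K" unfolding card_Pow_lt
    by (metis of_nat_le_iff of_nat_numeral of_nat_power)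
  with i2 show "real (card (Cset k)) \<ge> x * real F - 2 ^ K" by linarith
qed

end


definition piece :: "bool list \<Rightarrow> nat set \<Rightarrow> bool list" where
  "piece xs I = tab (\<lambda>i. xs ! i) I"

lemma finite_lists_F: "finite {xs :: bool list. length xs = F}"
  using finite_lists_length_eq[of "UNIV :: bool set" F] by simp

lemma card_lists_F: "card {xs :: bool list. length xs = F} = 2 ^ F"
  using card_lists_length_eq[of "UNIV :: bool set" F] by simp

lemma finite_file_tuples: "finite (file_tuples N F)"
  unfolding file_tuples_def by (intro finite_PiE) (auto simp: finite_lists_F)

lemma file_tuples_len: "W \<in> file_tuples N F \<Longrightarrow> n < N \<Longrightarrow> length (W n) = F"
  unfolding file_tuples_def by (auto simp: PiE_iff)

lemma K_pow_lt: "K * 2 ^ s < (2::nat) ^ (s + K + 1)"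
proof -
  have "K < 2 ^ K" by (rule less_exp)
  then have "K * 2 ^ s < 2 ^ K * 2 ^ s" by simp
  also have "\<dots> \<le> 2 ^ (s + K + 1)" by (simp add: power_add)
  finally show ?thesis .
qed

locale cc =
  fixes N K L :: nat and P :: "nat \<Rightarrow> nat set" and Ms :: "nat \<Rightarrow> real"
  assumes N1: "N \<ge> 1" and Pne: "\<forall>l<L. P l \<noteq> {}"
    and Pdisj: "\<forall>l<L. \<forall>l'<L. l \<noteq> l' \<longrightarrow> P l \<inter> P l' = {}"
    and Pcov: "(\<Union>l<L. P l) = {..<N}"
    and Ms0: "\<forall>l<L. Ms l \<ge> 0"
begin

lemma P_sub: "l < L \<Longrightarrow> P l \<subseteq> {..<N}" using Pcov by blast

lemma P_fin: "l < L \<Longrightarrow> finite (P l)" using P_sub finite_subset by blast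

lemma P_card: "l < L \<Longrightarrow> card (P l) \<ge> 1"
  using P_fin Pne by (metis One_nat_def Suc_leI card_gt_0_iff)

definition cls :: "nat \<Rightarrow> nat" where "cls n = (THE l. l < L \<and> n \<in> P l)"

lemma cls_eq: assumes "l < L" "n \<in> P l" shows "cls n = l"
  unfolding cls_def
proof (rule the_equality)
  show "l < L \<and> n \<in> P l" using assms by simp
  fix l' assume "l' < L \<and> n \<in> P l'"
  then show "l' = l" using Pdisj assms by blast
qed

lemma cls: assumes "n < N" shows "cls n < L" "n \<in> P (cls n)"
proof -
  obtain l where "l < L" "n \<in> P l" using assms Pcov by blast
  then show "cls n < L" "n \<in> P (cls n)" using cls_eq by auto
qed

definition xl :: "nat \<Rightarrow> real" where "xl l = min (Ms l / real (card (P l))) 1"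

lemma xl: assumes "l < L" shows "0 \<le> xl l" "xl l \<le> 1" "real (card (P l)) * xl l \<le> Ms l"
proof -
  have c: "real (card (P l)) > 0" using P_card[OF assms] by simp
  show "0 \<le> xl l" "xl l \<le> 1" unfolding xl_def using Ms0 assms c by auto
  have "real (card (P l)) * xl l \<le> real (card (P l)) * (Ms l / real (card (P l)))"
    unfolding xl_def using c by (intro mult_left_mono) auto
  then show "real (card (P l)) * xl l \<le> Ms l" using c by simp
qed

definition Ip :: "nat \<Rightarrow> nat \<Rightarrow> nat set \<Rightarrow> nat set" where
  "Ip F l = (SOME I. goodI K (xl l) F I)"

lemma gI: assumes "l < L" shows "goodI K (xl l) F (Ip F l)"
proof -
  have "\<exists>I. goodI K (xl l) F I" by (rule goodI_ex[OF xl(1,2)[OF assms]])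
  then show ?thesis unfolding Ip_def by (rule someI_ex)
qed

definition Cs :: "nat \<Rightarrow> nat \<Rightarrow> nat \<Rightarrow> nat set" where
  "Cs F l k = Cset K (Ip F l) k"

lemma Cs_def2: "l < L \<Longrightarrow> Cs F l k = (\<Union>T\<in>{T\<in>Pow {..<K}. k \<in> T}. Ip F l T)"
  unfolding Cs_def by (rule Cset_def[OF gI xl(1,2)])

lemma Cs_sub: "l < L \<Longrightarrow> Cs F l k \<subseteq> {..<F}"
  unfolding Cs_def by (rule Cset_sub[OF gI xl(1,2)])

lemma Cs_fin: "l < L \<Longrightarrow> finite (Cs F l k)"
  using Cs_sub finite_subset finite_lessThan by metis

lemma Ip_fin: "l < L \<Longrightarrow> T \<in> Pow {..<K} \<Longrightarrow> finite (Ip F l T)"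
  by (rule gI_fin[OF gI xl(1,2)])

lemma Ip_sub: "l < L \<Longrightarrow> T \<in> Pow {..<K} \<Longrightarrow> Ip F l T \<subseteq> {..<F}"
  by (rule gI_sub[OF gI xl(1,2)])

definition Sset :: "(nat \<Rightarrow> nat) \<Rightarrow> nat \<Rightarrow> nat set" where
  "Sset d l = {k\<in>{..<K}. d k \<in> P l}"

definition Dset :: "(nat \<Rightarrow> nat) \<Rightarrow> nat \<Rightarrow> nat set" where
  "Dset d l = d ` Sset d l"

definition useN :: "(nat \<Rightarrow> nat) \<Rightarrow> nat \<Rightarrow> bool" where
  "useN d l \<longleftrightarrow> xl l = 0 \<or> real (card (P l)) \<le> (1 - (1 - xl l) ^ card (Sset d l)) / xl l"

definition Vs :: "(nat \<Rightarrow> nat) \<Rightarrow> nat \<Rightarrow> nat set set" where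
  "Vs d l = {V\<in>Pow {..<K}. V \<inter> Sset d l \<noteq> {}}"

definition blocks :: "(nat \<Rightarrow> nat) \<Rightarrow> (nat \<times> nat set option) set" where
  "blocks d = (SIGMA l:{..<L}. if useN d l then {None} else Some ` Vs d l)"

definition proj :: "nat \<Rightarrow> (nat \<Rightarrow> nat) \<Rightarrow> nat \<times> nat set option \<Rightarrow> (nat \<Rightarrow> bool list) \<Rightarrow> (nat \<Rightarrow> bool list)" where
  "proj F d b W = (case b of (l, None) \<Rightarrow> (\<lambda>n. if n \<in> Dset d l then W n else [])
     | (l, Some V) \<Rightarrow> (\<lambda>i. if i \<in> V \<inter> Sset d l then piece (W (d i)) (Ip F l (V - {i})) else []))"

definition rel :: "nat \<Rightarrow> (nat \<Rightarrow> nat) \<Rightarrow> nat \<times> nat set option \<Rightarrow> (nat \<Rightarrow> bool list) \<Rightarrow> (nat \<Rightarrow> bool list) \<Rightarrow> bool" where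
  "rel F d b y y' = (case b of (l, None) \<Rightarrow>
        (\<exists>k\<in>Sset d l. y (d k) \<noteq> y' (d k) \<and> (\<forall>n\<in>Dset d l. \<forall>j\<in>Cs F l k. y n ! j = y' n ! j))
     | (l, Some V) \<Rightarrow> (\<exists>k\<in>V \<inter> Sset d l. y k \<noteq> y' k \<and> (\<forall>i\<in>V \<inter> Sset d l - {k}. y i = y' i)))"

definition ee :: "nat \<Rightarrow> nat \<Rightarrow> nat" where
  "ee F l = Max (insert 0 ((\<lambda>k. F - card (Cs F l k)) ` {..<K}))"

definition smax :: "nat \<Rightarrow> (nat \<Rightarrow> nat) \<Rightarrow> nat \<Rightarrow> nat set \<Rightarrow> nat" where
  "smax F d l V = Max (insert 0 ((\<lambda>i. card (Ip F l (V - {i}))) ` (V \<inter> Sset d l)))"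

definition width :: "nat \<Rightarrow> (nat \<Rightarrow> nat) \<Rightarrow> nat \<times> nat set option \<Rightarrow> nat" where
  "width F d b = (case b of (l, None) \<Rightarrow> card (Dset d l) * ee F l + K + 1
     | (l, Some V) \<Rightarrow> smax F d l V + K + 1)"

lemma Sset_sub: "Sset d l \<subseteq> {..<K}" unfolding Sset_def by auto

lemma Dset_sub: "l < L \<Longrightarrow> Dset d l \<subseteq> P l" unfolding Dset_def Sset_def by auto

lemma finite_blocks: "finite (blocks d)"
  unfolding blocks_def Vs_def by (intro finite_SigmaI) auto

lemma rel_None: "rel F d (l, None) y y' \<longleftrightarrow>
   (\<exists>k\<in>Sset d l. y (d k) \<noteq> y' (d k) \<and> (\<forall>n\<in>Dset d l. \<forall>j\<in>Cs F l k. y n ! j = y' n ! j))"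
  unfolding rel_def by simp

lemma rel_Some: "rel F d (l, Some V) y y' \<longleftrightarrow>
   (\<exists>k\<in>V \<inter> Sset d l. y k \<noteq> y' k \<and> (\<forall>i\<in>V \<inter> Sset d l - {k}. y i = y' i))"
  unfolding rel_def by simp

lemma rel_sym: "rel F d b y y' \<Longrightarrow> rel F d b y' y"
proof (cases b)
  case (Pair l ov)
  then show "rel F d b y y' \<Longrightarrow> rel F d b y' y"
  proof (cases ov)
    case None
    assume "rel F d b y y'"
    then obtain k where "k\<in>Sset d l" "y (d k) \<noteq> y' (d k)" "\<forall>n\<in>Dset d l. \<forall>j\<in>Cs F l k. y n ! j = y' n ! j"
      using Pair None rel_None by blast
    then show ?thesis using Pair None rel_None[of F d l y' y] by metis
  next
    case (Some V)
    assume "rel F d b y y'"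
    then obtain k where "k\<in>V \<inter> Sset d l" "y k \<noteq> y' k" "\<forall>i\<in>V \<inter> Sset d l - {k}. y i = y' i"
      using Pair Some rel_Some by blast
    then show ?thesis using Pair Some rel_Some[of F d l V y' y] by metis
  qed
qed

lemma rel_irr: "\<not> rel F d b y y"
  unfolding rel_def by (cases b; cases "snd b") auto

end


context cc begin

lemma proj_None: "proj F d (l, None) W = (\<lambda>n. if n \<in> Dset d l then W n else [])"
  unfolding proj_def by simp

lemma proj_Some: "proj F d (l, Some V) W =
   (\<lambda>i. if i \<in> V \<inter> Sset d l then piece (W (d i)) (Ip F l (V - {i})) else [])"
  unfolding proj_def by simp

lemma card_Sset: "card (Sset d l) \<le> K"
  using card_mono[OF _ Sset_sub] by (metis card_lessThan finite_lessThan)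

lemma degN:
  assumes l: "l < L" and W: "W \<in> file_tuples N F"
  shows "card {y'\<in>proj F d (l, None) ` file_tuples N F. rel F d (l, None) (proj F d (l, None) W) y'}
           < 2 ^ width F d (l, None)"
proof -
  define X where "X = file_tuples N F"
  define Y where "Y = proj F d (l, None) ` X"
  define y where "y = proj F d (l, None) W"
  define D where "D = Dset d l"
  define S where "S = Sset d l"
  define A where "A k = {y'\<in>Y. \<forall>n\<in>D. \<forall>j\<in>Cs F l k. y' n ! j = y n ! j}" for k
  have finY: "finite Y" unfolding Y_def X_def using finite_file_tuples by blast
  have DN: "n \<in> D \<Longrightarrow> n < N" for n using Dset_sub[OF l] P_sub[OF l] unfolding D_def by blast
  have sub: "{y'\<in>Y. rel F d (l, None) y y'} \<subseteq> (\<Union>k\<in>S. A k)"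
  proof
    fix y' assume "y' \<in> {y'\<in>Y. rel F d (l, None) y y'}"
    then have "y' \<in> Y" "rel F d (l, None) y y'" by auto
    then obtain k where "k \<in> S" "\<forall>n\<in>D. \<forall>j\<in>Cs F l k. y n ! j = y' n ! j"
      unfolding rel_None S_def D_def by blast
    then show "y' \<in> (\<Union>k\<in>S. A k)" using \<open>y' \<in> Y\<close> unfolding A_def by auto
  qed
  have cardA: "card (A k) \<le> 2 ^ (card D * ee F l)" if "k \<in> S" for k
  proof -
    define Sg where "Sg = Sigma D (\<lambda>n. {..<F} - Cs F l k)"
    have finD: "finite D" unfolding D_def Dset_def S_def Sset_def by simp
    have finSg: "finite Sg" unfolding Sg_def using finD by auto
    define \<phi> where "\<phi> y' = tab (\<lambda>(n,j). y' n ! j) Sg" for y' :: "nat \<Rightarrow> bool list"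
    have inj: "inj_on \<phi> (A k)"
    proof (rule inj_onI)
      fix y1 y2 assume y1: "y1 \<in> A k" and y2: "y2 \<in> A k" and eq: "\<phi> y1 = \<phi> y2"
      from y1 obtain W1 where W1: "W1 \<in> X" "y1 = proj F d (l, None) W1" unfolding A_def Y_def by auto
      from y2 obtain W2 where W2: "W2 \<in> X" "y2 = proj F d (l, None) W2" unfolding A_def Y_def by auto
      have tabeq: "\<forall>a\<in>Sg. (\<lambda>(n,j). y1 n ! j) a = (\<lambda>(n,j). y2 n ! j) a"
        using eq unfolding \<phi>_def by (subst tab_eq[OF finSg, symmetric])
      show "y1 = y2"
      proof
        fix n
        show "y1 n = y2 n"
        proof (cases "n \<in> D")
          case True
          have len: "length (y1 n) = F" "length (y2 n) = F"
            using W1 W2 True DN file_tuples_len unfolding proj_None D_def X_def by auto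
          show ?thesis
          proof (rule nth_equalityI)
            show "length (y1 n) = length (y2 n)" using len by simp
            fix j assume "j < length (y1 n)"
            then have j: "j < F" using len by simp
            show "y1 n ! j = y2 n ! j"
            proof (cases "j \<in> Cs F l k")
              case True
              then show ?thesis using y1 y2 \<open>n \<in> D\<close> unfolding A_def by auto
            next
              case False
              then have "(n, j) \<in> Sg" unfolding Sg_def using j \<open>n \<in> D\<close> by auto
              then show ?thesis using tabeq by auto
            qed
          qed
        next
          case False
          then show ?thesis using W1 W2 unfolding proj_None D_def by simp
        qed
      qed
    qed
    have img: "\<phi> ` A k \<subseteq> {xs. length xs = card Sg}"
      unfolding \<phi>_def using length_tab[OF finSg] by auto
    have "card (A k) = card (\<phi> ` A k)" using card_image[OF inj] by simp
    also have "\<dots> \<le> card {xs :: bool list. length xs = card Sg}"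
      by (rule card_mono[OF finite_lists_F img])
    also have "\<dots> = 2 ^ card Sg" by (rule card_lists_F)
    also have "card Sg = card D * (F - card (Cs F l k))"
    proof -
      have "card Sg = (\<Sum>n\<in>D. card ({..<F} - Cs F l k))"
        unfolding Sg_def by (rule card_SigmaI[OF finD]) auto
      also have "\<dots> = card D * (F - card (Cs F l k))"
        using card_Diff_subset[OF Cs_fin[OF l] Cs_sub[OF l]] by simp
      finally show ?thesis .
    qed
    also have "(2::nat) ^ (card D * (F - card (Cs F l k))) \<le> 2 ^ (card D * ee F l)"
    proof (rule power_increasing)
      have "k < K" using that unfolding S_def Sset_def by auto
      then have "F - card (Cs F l k) \<le> ee F l" unfolding ee_def
        by (intro Max_ge) auto
      then show "card D * (F - card (Cs F l k)) \<le> card D * ee F l" by simp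
    qed simp
    finally show ?thesis .
  qed
  have finA: "finite (A k)" for k unfolding A_def using finY by simp
  have finS: "finite S" unfolding S_def Sset_def by simp
  have "card {y'\<in>Y. rel F d (l, None) y y'} \<le> card (\<Union>k\<in>S. A k)"
    by (rule card_mono[OF _ sub]) (use finS finA in auto)
  also have "\<dots> \<le> (\<Sum>k\<in>S. card (A k))" by (rule card_UN_le[OF finS])
  also have "\<dots> \<le> (\<Sum>k\<in>S. 2 ^ (card D * ee F l))" by (rule sum_mono) (rule cardA)
  also have "\<dots> = card S * 2 ^ (card D * ee F l)" by simp
  also have "\<dots> \<le> K * 2 ^ (card D * ee F l)" using card_Sset[of d l] unfolding S_def by simp
  also have "\<dots> < 2 ^ (card D * ee F l + K + 1)" by (rule K_pow_lt)
  finally show ?thesis unfolding width_def Y_def X_def y_def D_def by simp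
qed

lemma degS:
  assumes l: "l < L" and V: "V \<in> Pow {..<K}" and W: "W \<in> file_tuples N F"
  shows "card {y'\<in>proj F d (l, Some V) ` file_tuples N F. rel F d (l, Some V) (proj F d (l, Some V) W) y'}
           < 2 ^ width F d (l, Some V)"
proof -
  define X where "X = file_tuples N F"
  define Y where "Y = proj F d (l, Some V) ` X"
  define y where "y = proj F d (l, Some V) W"
  define S where "S = V \<inter> Sset d l"
  define A where "A k = {y'\<in>Y. \<forall>i\<in>S - {k}. y' i = y i}" for k
  have finY: "finite Y" unfolding Y_def X_def using finite_file_tuples by blast
  have sub: "{y'\<in>Y. rel F d (l, Some V) y y'} \<subseteq> (\<Union>k\<in>S. A k)"
  proof
    fix y' assume "y' \<in> {y'\<in>Y. rel F d (l, Some V) y y'}"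
    then have "y' \<in> Y" "rel F d (l, Some V) y y'" by auto
    then obtain k where "k \<in> S" "\<forall>i\<in>S - {k}. y i = y' i"
      unfolding rel_Some S_def by blast
    then have "y' \<in> A k" using \<open>y' \<in> Y\<close> unfolding A_def by auto
    then show "y' \<in> (\<Union>k\<in>S. A k)" using \<open>k \<in> S\<close> by blast
  qed
  have cardA: "card (A k) \<le> 2 ^ smax F d l V" if "k \<in> S" for k
  proof -
    have VK: "V - {k} \<in> Pow {..<K}" using V by auto
    define \<phi> where "\<phi> y' = (y' k :: bool list)" for y' :: "nat \<Rightarrow> bool list"
    have inj: "inj_on \<phi> (A k)"
    proof (rule inj_onI)
      fix y1 y2 assume y1: "y1 \<in> A k" and y2: "y2 \<in> A k" and eq: "\<phi> y1 = \<phi> y2"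
      from y1 obtain W1 where W1: "y1 = proj F d (l, Some V) W1" unfolding A_def Y_def by auto
      from y2 obtain W2 where W2: "y2 = proj F d (l, Some V) W2" unfolding A_def Y_def by auto
      show "y1 = y2"
      proof
        fix i
        show "y1 i = y2 i"
        proof (cases "i \<in> S")
          case True
          show ?thesis
          proof (cases "i = k")
            case True then show ?thesis using eq unfolding \<phi>_def by simp
          next
            case False then show ?thesis using y1 y2 \<open>i \<in> S\<close> unfolding A_def by auto
          qed
        next
          case False
          then have "i \<notin> V \<inter> Sset d l" unfolding S_def by simp
          then show ?thesis using W1 W2 unfolding proj_Some by auto
        qed
      qed
    qed
    have img: "\<phi> ` A k \<subseteq> {xs. length xs = card (Ip F l (V - {k}))}"
    proof
      fix xs assume "xs \<in> \<phi> ` A k"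
      then obtain W' where "xs = proj F d (l, Some V) W' k" unfolding \<phi>_def A_def Y_def by auto
      then show "xs \<in> {xs. length xs = card (Ip F l (V - {k}))}"
        using that length_tab[OF Ip_fin[OF l VK]] unfolding proj_Some S_def piece_def by auto
    qed
    have "card (A k) = card (\<phi> ` A k)" using card_image[OF inj] by simp
    also have "\<dots> \<le> card {xs :: bool list. length xs = card (Ip F l (V - {k}))}"
      by (rule card_mono[OF finite_lists_F img])
    also have "\<dots> = 2 ^ card (Ip F l (V - {k}))" by (rule card_lists_F)
    also have "(2::nat) ^ card (Ip F l (V - {k})) \<le> 2 ^ smax F d l V"
    proof (rule power_increasing)
      show "card (Ip F l (V - {k})) \<le> smax F d l V" unfolding smax_def
        using that unfolding S_def by (intro Max_ge) (auto simp: Sset_def)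
    qed simp
    finally show ?thesis .
  qed
  have finA: "finite (A k)" for k unfolding A_def using finY by simp
  have finS: "finite S" unfolding S_def Sset_def by simp
  have "card {y'\<in>Y. rel F d (l, Some V) y y'} \<le> card (\<Union>k\<in>S. A k)"
    by (rule card_mono[OF _ sub]) (use finS finA in auto)
  also have "\<dots> \<le> (\<Sum>k\<in>S. card (A k))" by (rule card_UN_le[OF finS])
  also have "\<dots> \<le> (\<Sum>k\<in>S. 2 ^ smax F d l V)" by (rule sum_mono) (rule cardA)
  also have "\<dots> = card S * 2 ^ smax F d l V" by simp
  also have "\<dots> \<le> K * 2 ^ smax F d l V"
  proof -
    have "card S \<le> card (Sset d l)" unfolding S_def by (rule card_mono) (auto simp: Sset_def)
    then show ?thesis using card_Sset[of d l] by simp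
  qed
  also have "\<dots> < 2 ^ (smax F d l V + K + 1)" by (rule K_pow_lt)
  finally show ?thesis unfolding width_def Y_def X_def y_def by simp
qed

lemma deg:
  assumes b: "b \<in> blocks d" and y: "y \<in> proj F d b ` file_tuples N F"
  shows "card {y'\<in>proj F d b ` file_tuples N F. rel F d b y y'} < 2 ^ width F d b"
proof -
  obtain W where W: "W \<in> file_tuples N F" "y = proj F d b W" using y by auto
  obtain l ov where bl: "b = (l, ov)" by (cases b)
  then have l: "l < L" using b unfolding blocks_def by auto
  show ?thesis
  proof (cases ov)
    case None
    then show ?thesis using degN[OF l W(1), of d] W bl by simp
  next
    case (Some V)
    then have "V \<in> Pow {..<K}" using b bl unfolding blocks_def Vs_def by (auto split: if_splits)
    then show ?thesis using degS[OF l _ W(1), of V d] W bl Some by simp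
  qed
qed

end


context cc begin

definition cacheF :: "nat \<Rightarrow> nat \<Rightarrow> (nat \<Rightarrow> bool list) \<Rightarrow> bool list" where
  "cacheF F k W = tab (\<lambda>(n,j). W n ! j) (SIGMA n:{..<N}. Cs F (cls n) k)"

lemma finite_cacheSigma: "finite (SIGMA n:{..<N}. Cs F (cls n) k)"
  by (intro finite_SigmaI) (auto intro: Cs_fin cls)

lemma cache_eq:
  assumes "cacheF F k W = cacheF F k W'" "n < N" "j \<in> Cs F (cls n) k"
  shows "W n ! j = W' n ! j"
proof -
  have "\<forall>a\<in>(SIGMA n:{..<N}. Cs F (cls n) k). (\<lambda>(n,j). W n ! j) a = (\<lambda>(n,j). W' n ! j) a"
    using assms(1) unfolding cacheF_def by (subst tab_eq[OF finite_cacheSigma, symmetric])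
  then show ?thesis using assms(2,3) by auto
qed

lemma demand_lt: "d \<in> demand_vectors N K \<Longrightarrow> k < K \<Longrightarrow> d k < N"
  unfolding demand_vectors_def by (auto simp: PiE_iff)

lemma decode:
  assumes d: "d \<in> demand_vectors N K" and W: "W \<in> file_tuples N F" and W': "W' \<in> file_tuples N F"
    and k: "k < K"
    and cache: "\<forall>n<N. \<forall>j\<in>Cs F (cls n) k. W n ! j = W' n ! j"
    and nrel: "\<forall>b\<in>blocks d. \<not> rel F d b (proj F d b W) (proj F d b W')"
  shows "W (d k) = W' (d k)"
proof (rule ccontr)
  assume ne: "W (d k) \<noteq> W' (d k)"
  have dk: "d k < N" using demand_lt[OF d k] .
  define l where "l = cls (d k)"
  have l: "l < L" "d k \<in> P l" using cls[OF dk] unfolding l_def by auto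
  have kS: "k \<in> Sset d l" using k l unfolding Sset_def by auto
  have len: "length (W (d k)) = F" "length (W' (d k)) = F" using file_tuples_len W W' dk by auto
  have "\<exists>j<F. W (d k) ! j \<noteq> W' (d k) ! j"
    using ne len by (auto simp: list_eq_iff_nth_eq)
  then obtain j where j: "j < F" "W (d k) ! j \<noteq> W' (d k) ! j" by blast
  have cacheP: "W n ! a = W' n ! a" if "n \<in> P l" "a \<in> Cs F l k" for n a
  proof -
    have "n < N" using P_sub[OF l(1)] that(1) by auto
    moreover have "cls n = l" using cls_eq[OF l(1) that(1)] .
    ultimately show ?thesis using cache that(2) by auto
  qed
  show False
  proof (cases "useN d l")
    case True
    then have b: "(l, None) \<in> blocks d" using l unfolding blocks_def by auto
    have "rel F d (l, None) (proj F d (l, None) W) (proj F d (l, None) W')"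
      unfolding rel_None
    proof (intro bexI[of _ k] conjI ballI)
      have "d k \<in> Dset d l" using kS unfolding Dset_def by auto
      then show "proj F d (l, None) W (d k) \<noteq> proj F d (l, None) W' (d k)"
        using ne unfolding proj_None by simp
      fix n a assume n: "n \<in> Dset d l" and a: "a \<in> Cs F l k"
      have "n \<in> P l" using n Dset_sub[OF l(1)] by auto
      then show "proj F d (l, None) W n ! a = proj F d (l, None) W' n ! a"
        using cacheP[OF _ a] n unfolding proj_None by simp
    qed (rule kS)
    then show False using nrel b by blast
  next
    case False
    have "j \<in> (\<Union>T\<in>Pow {..<K}. Ip F l T)" using gI_cover[OF gI[OF l(1)] xl(1,2)[OF l(1)]] j(1) by auto
    then obtain T where T: "T \<in> Pow {..<K}" "j \<in> Ip F l T" by auto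
    show False
    proof (cases "k \<in> T")
      case True
      then have "j \<in> Cs F l k" using T Cs_def2[OF l(1)] by auto
      then show False using cacheP[OF l(2)] j(2) by blast
    next
      case False
      define V where "V = insert k T"
      have V: "V \<in> Pow {..<K}" using T k unfolding V_def by auto
      have kV: "k \<in> V \<inter> Sset d l" using kS unfolding V_def by auto
      have VT: "V - {k} = T" using False unfolding V_def by auto
      have b: "(l, Some V) \<in> blocks d" using l(1) \<open>\<not> useN d l\<close> V kV unfolding blocks_def Vs_def by auto
      have "rel F d (l, Some V) (proj F d (l, Some V) W) (proj F d (l, Some V) W')"
        unfolding rel_Some
      proof (intro bexI[of _ k] conjI ballI)
        show "proj F d (l, Some V) W k \<noteq> proj F d (l, Some V) W' k"
        proof
          assume "proj F d (l, Some V) W k = proj F d (l, Some V) W' k"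
          then have "piece (W (d k)) (Ip F l T) = piece (W' (d k)) (Ip F l T)" using kV VT unfolding proj_Some by simp
          then have "\<forall>a\<in>Ip F l T. W (d k) ! a = W' (d k) ! a"
            unfolding piece_def by (subst tab_eq[OF Ip_fin[OF l(1) T(1)], symmetric])
          then show False using T(2) j(2) by blast
        qed
        fix i assume i: "i \<in> V \<inter> Sset d l - {k}"
        have Vi: "V - {i} \<in> Pow {..<K}" using V by auto
        have kVi: "k \<in> V - {i}" using i kV by auto
        have diP: "d i \<in> P l" using i unfolding Sset_def by auto
        have "\<forall>a\<in>Ip F l (V - {i}). W (d i) ! a = W' (d i) ! a"
        proof
          fix a assume "a \<in> Ip F l (V - {i})"
          then have "a \<in> Cs F l k" using Cs_def2[OF l(1)] Vi kVi by auto
          then show "W (d i) ! a = W' (d i) ! a" using cacheP[OF diP] by blast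
        qed
        then have "piece (W (d i)) (Ip F l (V - {i})) = piece (W' (d i)) (Ip F l (V - {i}))"
          unfolding piece_def by (subst tab_eq[OF Ip_fin[OF l(1) Vi]])
        then show "proj F d (l, Some V) W i = proj F d (l, Some V) W' i"
          using i unfolding proj_Some by simp
      qed (rule kV)
      then show False using nrel b by blast
    qed
  qed
qed

definition goodE :: "nat \<Rightarrow> (nat \<Rightarrow> nat) \<Rightarrow> ((nat \<Rightarrow> bool list) \<Rightarrow> bool list) \<Rightarrow> bool" where
  "goodE F d E \<longleftrightarrow> (\<forall>W\<in>file_tuples N F. length (E W) = (\<Sum>b\<in>blocks d. width F d b)) \<and>
     (\<forall>W\<in>file_tuples N F. \<forall>W'\<in>file_tuples N F. E W = E W' \<longrightarrow>
        (\<forall>b\<in>blocks d. \<not> rel F d b (proj F d b W) (proj F d b W')))"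

definition encF :: "nat \<Rightarrow> (nat \<Rightarrow> nat) \<Rightarrow> (nat \<Rightarrow> bool list) \<Rightarrow> bool list" where
  "encF F d = (SOME E. goodE F d E)"

lemma encF_good: "goodE F d (encF F d)"
proof -
  have "\<exists>E::(nat \<Rightarrow> bool list) \<Rightarrow> bool list. goodE F d E"
    unfolding goodE_def
  proof (rule block_encoding[where X="file_tuples N F" and B="blocks d" and R="rel F d" and pr="proj F d" and w="width F d"])
    show "finite (file_tuples N F)" by (rule finite_file_tuples)
    show "finite (blocks d)" by (rule finite_blocks)
    show "\<And>b y y'. b \<in> blocks d \<Longrightarrow> rel F d b y y' \<Longrightarrow> rel F d b y' y" by (rule rel_sym)
    show "\<And>b y. b \<in> blocks d \<Longrightarrow> \<not> rel F d b y y" by (rule rel_irr)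
    show "\<And>b y. b \<in> blocks d \<Longrightarrow> y \<in> proj F d b ` file_tuples N F \<Longrightarrow>
          card {y' \<in> proj F d b ` file_tuples N F. rel F d b y y'} < 2 ^ width F d b"
      by (rule deg)
  qed
  then show ?thesis unfolding encF_def by (rule someI_ex)
qed

definition decF :: "nat \<Rightarrow> nat \<Rightarrow> (nat \<Rightarrow> nat) \<Rightarrow> bool list \<Rightarrow> bool list \<Rightarrow> bool list" where
  "decF F k d m c = (SOME w. \<exists>W\<in>file_tuples N F. cacheF F k W = c \<and> encF F d W = m \<and> W (d k) = w)"

definition sch :: "nat \<Rightarrow> scheme" where
  "sch F = \<lparr>cache = cacheF F, enc = encF F, dec = decF F\<rparr>"

lemma dec_ok:
  assumes d: "d \<in> demand_vectors N K" and W: "W \<in> file_tuples N F" and k: "k < K"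
  shows "decF F k d (encF F d W) (cacheF F k W) = W (d k)"
  unfolding decF_def
proof (rule someI2)
  show "\<exists>W'\<in>file_tuples N F. cacheF F k W' = cacheF F k W \<and> encF F d W' = encF F d W \<and> W' (d k) = W (d k)"
    using W by blast
  fix w assume "\<exists>W'\<in>file_tuples N F. cacheF F k W' = cacheF F k W \<and> encF F d W' = encF F d W \<and> W' (d k) = w"
  then obtain W' where W': "W' \<in> file_tuples N F" "cacheF F k W' = cacheF F k W" "encF F d W' = encF F d W" "W' (d k) = w"
    by blast
  have "\<forall>b\<in>blocks d. \<not> rel F d b (proj F d b W') (proj F d b W)"
    using encF_good[of F d] W W'(1,3) unfolding goodE_def by blast
  moreover have "\<forall>n<N. \<forall>j\<in>Cs F (cls n) k. W' n ! j = W n ! j"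
    using cache_eq[OF W'(2)] by blast
  ultimately have "W' (d k) = W (d k)" by (intro decode[OF d W'(1) W k])
  then show "w = W (d k)" using W'(4) by simp
qed

lemma err_zero:
  assumes d: "d \<in> demand_vectors N K"
  shows "err_prob N K F (sch F) d = 0"
proof -
  have e: "{W \<in> file_tuples N F. \<exists>k<K. dec (sch F) k d (enc (sch F) d W) (cache (sch F) k W) \<noteq> W (d k)} = {}"
    using dec_ok[OF d] unfolding sch_def by auto
  show ?thesis unfolding err_prob_def e by simp
qed

lemma file_tuples_ne: "file_tuples N F \<noteq> {}"
proof -
  have "restrict (\<lambda>n. replicate F False) {..<N} \<in> file_tuples N F"
    unfolding file_tuples_def by auto
  then show ?thesis by blast
qed

lemma msg_len_eq: "msg_len N F (sch F) d = (\<Sum>b\<in>blocks d. width F d b)"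
proof -
  have "(\<lambda>W. length (enc (sch F) d W)) ` file_tuples N F = {\<Sum>b\<in>blocks d. width F d b}"
  proof
    show "(\<lambda>W. length (enc (sch F) d W)) ` file_tuples N F \<subseteq> {\<Sum>b\<in>blocks d. width F d b}"
      using encF_good[of F d] unfolding goodE_def sch_def by auto
    obtain W0 where "W0 \<in> file_tuples N F" using file_tuples_ne by blast
    then have "length (enc (sch F) d W0) = (\<Sum>b\<in>blocks d. width F d b)"
      using encF_good[of F d] unfolding goodE_def sch_def by auto
    then show "{\<Sum>b\<in>blocks d. width F d b} \<subseteq> (\<lambda>W. length (enc (sch F) d W)) ` file_tuples N F"
      using \<open>W0 \<in> file_tuples N F\<close> by force
  qed
  then show ?thesis unfolding msg_len_def by simp
qed

lemma cache_ok:
  assumes M: "(\<Sum>l<L. Ms l) = M"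
  shows "cache_ok M N K F (sch F)"
  unfolding cache_ok_def
proof (intro allI impI ballI)
  fix k W assume k: "k < K" and W: "W \<in> file_tuples N F"
  have "length (cache (sch F) k W) = card (SIGMA n:{..<N}. Cs F (cls n) k)"
    unfolding sch_def cacheF_def using length_tab[OF finite_cacheSigma] by simp
  also have "\<dots> = (\<Sum>n<N. card (Cs F (cls n) k))"
    by (rule card_SigmaI) (auto intro: Cs_fin cls)
  also have "\<dots> = (\<Sum>n\<in>(\<Union>l<L. P l). card (Cs F (cls n) k))" using Pcov by simp
  also have "\<dots> = (\<Sum>l<L. \<Sum>n\<in>P l. card (Cs F (cls n) k))"
    by (rule sum.UNION_disjoint) (use P_fin Pdisj in auto)
  also have "\<dots> = (\<Sum>l<L. card (P l) * card (Cs F l k))"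
  proof (rule sum.cong[OF refl])
    fix l assume "l \<in> {..<L}"
    then have "(\<Sum>n\<in>P l. card (Cs F (cls n) k)) = (\<Sum>n\<in>P l. card (Cs F l k))"
      using cls_eq by (intro sum.cong) auto
    then show "(\<Sum>n\<in>P l. card (Cs F (cls n) k)) = card (P l) * card (Cs F l k)" by simp
  qed
  finally have eq: "real (length (cache (sch F) k W)) = (\<Sum>l<L. real (card (P l)) * real (card (Cs F l k)))"
    by simp
  also have "\<dots> \<le> (\<Sum>l<L. Ms l * real F)"
  proof (rule sum_mono)
    fix l assume l: "l \<in> {..<L}"
    then have l': "l < L" by simp
    have "real (card (Cs F l k)) \<le> xl l * real F"
      unfolding Cs_def by (rule Cset_card(1)[OF gI[OF l'] xl(1,2)[OF l'] k])
    then have "real (card (P l)) * real (card (Cs F l k)) \<le> real (card (P l)) * (xl l * real F)"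
      by (intro mult_left_mono) auto
    also have "\<dots> = (real (card (P l)) * xl l) * real F" by simp
    also have "\<dots> \<le> Ms l * real F" by (intro mult_right_mono xl(3)[OF l']) auto
    finally show "real (card (P l)) * real (card (Cs F l k)) \<le> Ms l * real F" .
  qed
  also have "\<dots> = M * real F" using M by (simp add: sum_distrib_right[symmetric])
  finally show "real (length (cache (sch F) k W)) \<le> M * real F" .
qed

end


lemma Rfun_nonneg: assumes "0 \<le> M" shows "0 \<le> Rfun M N K"
proof -
  consider "M = 0" | "M > real N" | "0 < M" "M \<le> real N" using assms by linarith
  then show ?thesis
  proof cases
    case 1 then show ?thesis unfolding Rfun_def by simp
  next
    case 2 then show ?thesis unfolding Rfun_def by simp
  next
    case 3
    have N: "real N > 0" using 3 by linarith
    have q: "0 \<le> 1 - M / real N" "1 - M / real N \<le> 1" using 3 N by (auto simp: field_simps)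
    then have "(1 - M / real N) ^ K \<le> 1" by (simp add: power_le_one)
    then have "0 \<le> (real N / M) * (1 - (1 - M / real N) ^ K)" using 3 N by simp
    then have "0 \<le> min ((real N / M) * (1 - (1 - M / real N) ^ K)) (real N)" by simp
    then show ?thesis unfolding Rfun_def using 3 q by simp
  qed
qed

lemma wt_remove:
  assumes V: "V \<subseteq> {..<K}" and i: "i \<in> V" and x: "x \<noteq> 0"
  shows "wt x K (V - {i}) = wt x K V * (1 - x) / x"
proof -
  have fin: "finite V" using V finite_subset by blast
  define c where "c = card V"
  have c1: "c \<ge> 1" using fin i unfolding c_def by (metis One_nat_def Suc_leI card_gt_0_iff empty_iff)
  have cK: "c \<le> K" unfolding c_def using card_mono[OF _ V] by simp
  have cr: "card (V - {i}) = c - 1" unfolding c_def using fin i by simp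
  have e1: "K - (c - 1) = Suc (K - c)" using c1 cK by simp
  have e2: "c = Suc (c - 1)" using c1 by simp
  have "wt x K V * (1 - x) / x = x ^ Suc (c - 1) * (1 - x) ^ (K - c) * (1 - x) / x"
    unfolding wt_def c_def[symmetric] using e2 by metis
  also have "\<dots> = x ^ (c - 1) * (1 - x) ^ Suc (K - c)" using x by (simp add: field_simps)
  also have "\<dots> = wt x K (V - {i})" unfolding wt_def cr e1 ..
  finally show ?thesis by simp
qed

context cc begin

definition C0 :: real where "C0 = real (2 ^ K * (2 ^ K + K + 1) + N * 2 ^ K + K + 1)"

lemma ee_bound: assumes l: "l < L" shows "real (ee F l) \<le> (1 - xl l) * real F + 2 ^ K"
proof -
  define A where "A = insert 0 ((\<lambda>k. F - card (Cs F l k)) ` {..<K})"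
  have finA: "finite A" unfolding A_def by simp
  have bnd: "real v \<le> (1 - xl l) * real F + 2 ^ K" if "v \<in> A" for v
  proof -
    have x1: "0 \<le> (1 - xl l) * real F" using xl(2)[OF l] by simp
    show ?thesis
    proof (cases "v = 0")
      case True then show ?thesis using x1 by simp
    next
      case False
      then have "v \<in> (\<lambda>k. F - card (Cs F l k)) ` {..<K}" using that unfolding A_def by auto
      then obtain k where k: "k < K" "v = F - card (Cs F l k)" by auto
      have cF: "card (Cs F l k) \<le> F" using card_mono[OF _ Cs_sub[OF l]] by simp
      have "real (card (Cs F l k)) \<ge> xl l * real F - 2 ^ K"
        unfolding Cs_def by (rule Cset_card(2)[OF gI[OF l] xl(1,2)[OF l] k(1)])
      then show ?thesis using k(2) cF by (simp add: of_nat_diff algebra_simps)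
    qed
  qed
  have "ee F l \<in> A" unfolding ee_def A_def[symmetric] using finA by (intro Max_in) (auto simp: A_def)
  then show ?thesis by (rule bnd)
qed

lemma smax_bound:
  assumes l: "l < L" and V: "V \<in> Pow {..<K}" and x: "xl l \<noteq> 0"
  shows "real (smax F d l V) \<le> wt (xl l) K V * (1 - xl l) / xl l * real F + 2 ^ K"
proof -
  define A where "A = insert 0 ((\<lambda>i. card (Ip F l (V - {i}))) ` (V \<inter> Sset d l))"
  have finA: "finite A" unfolding A_def Sset_def by simp
  have x0: "0 \<le> xl l" "xl l \<le> 1" using xl[OF l] by auto
  have bnd: "real v \<le> wt (xl l) K V * (1 - xl l) / xl l * real F + 2 ^ K" if "v \<in> A" for v
  proof (cases "v = 0")
    case True
    have "0 \<le> wt (xl l) K V * (1 - xl l) / xl l * real F"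
      using wt_nonneg[OF x0, of K V] x0 by simp
    then show ?thesis using True by simp
  next
    case False
    then have "v \<in> (\<lambda>i. card (Ip F l (V - {i}))) ` (V \<inter> Sset d l)" using that unfolding A_def by auto
    then obtain i where i: "i \<in> V" "v = card (Ip F l (V - {i}))" by auto
    have "real v \<le> wt (xl l) K (V - {i}) * real F + 2 ^ K"
      using gI_card_le[OF gI[OF l] x0, of "V - {i}"] V i by auto
    then show ?thesis using wt_remove[of V K i "xl l"] V i x by simp
  qed
  have "smax F d l V \<in> A" unfolding smax_def A_def[symmetric] using finA by (intro Max_in) (auto simp: A_def)
  then show ?thesis by (rule bnd)
qed

lemma Rfun_zero: assumes l: "l < L" and x: "xl l = 0"
  shows "Rfun (Ms l) (card (P l)) K' = real (min (card (P l)) K')"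
proof -
  have c: "real (card (P l)) > 0" using P_card[OF l] by simp
  have "min (Ms l / real (card (P l))) 1 = 0" using x unfolding xl_def .
  then have "Ms l / real (card (P l)) = 0" by (simp add: min_def split: if_splits)
  then have "Ms l = 0" using c by simp
  then show ?thesis unfolding Rfun_def by simp
qed

lemma Rfun_pos: assumes l: "l < L" and x: "xl l \<noteq> 0"
  shows "(1 - xl l) * min ((1 - (1 - xl l) ^ K') / xl l) (real (card (P l))) \<le> Rfun (Ms l) (card (P l)) K'"
proof -
  have c: "real (card (P l)) > 0" using P_card[OF l] by simp
  have Mpos: "Ms l > 0"
  proof (rule ccontr)
    assume "\<not> Ms l > 0" then have "Ms l = 0" using Ms0 l by force
    then show False using x unfolding xl_def by simp
  qed
  show ?thesis
  proof (cases "Ms l > real (card (P l))")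
    case True
    then have "xl l = 1" unfolding xl_def using c by (simp add: min_def field_simps)
    then show ?thesis using Rfun_nonneg[of "Ms l"] Mpos by simp
  next
    case False
    then have xe: "xl l = Ms l / real (card (P l))" unfolding xl_def using c by (simp add: min_def field_simps)
    have "real (card (P l)) / Ms l * (1 - (1 - Ms l / real (card (P l))) ^ K') =
          (1 - (1 - xl l) ^ K') / xl l" unfolding xe by simp
    then show ?thesis unfolding Rfun_def using Mpos False xe by (simp add: mult.commute)
  qed
qed

lemma Vs_sum: assumes x: "0 \<le> x" "x \<le> 1"
  shows "(\<Sum>V\<in>Vs d l. wt x K V) = 1 - (1 - x) ^ card (Sset d l)"
proof -
  have "Pow {..<K} = Vs d l \<union> {V\<in>Pow {..<K}. V \<inter> Sset d l = {}}" unfolding Vs_def by auto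
  moreover have "Vs d l \<inter> {V\<in>Pow {..<K}. V \<inter> Sset d l = {}} = {}" unfolding Vs_def by auto
  ultimately have "(\<Sum>V\<in>Pow {..<K}. wt x K V) = (\<Sum>V\<in>Vs d l. wt x K V) + (\<Sum>V\<in>{V\<in>Pow {..<K}. V \<inter> Sset d l = {}}. wt x K V)"
    by (metis (no_types, lifting) finite_Pow_iff finite_Un finite_lessThan sum.union_disjoint)
  then show ?thesis using sum_wt[where x=x and K=K] sum_wt_disj[OF Sset_sub, where x=x] by simp
qed

lemma class_rate:
  assumes l: "l < L"
  shows "real (\<Sum>ov\<in>(if useN d l then {None} else Some ` Vs d l). width F d (l, ov))
         \<le> Rfun (Ms l) (card (P l)) (card (Sset d l)) * real F + C0"
proof -
  define x where "x = xl l"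
  define D where "D = Dset d l"
  define K' where "K' = card (Sset d l)"
  have x0: "0 \<le> x" "x \<le> 1" using xl[OF l] unfolding x_def by auto
  have cD: "card D \<le> card (P l)" "card D \<le> K'" "card D \<le> N"
  proof -
    show "card D \<le> card (P l)" unfolding D_def by (rule card_mono[OF P_fin[OF l] Dset_sub[OF l]])
    show "card D \<le> K'" unfolding D_def Dset_def K'_def by (rule card_image_le) (simp add: Sset_def)
    have "card (P l) \<le> N" using card_mono[OF _ P_sub[OF l]] by simp
    then show "card D \<le> N" using \<open>card D \<le> card (P l)\<close> by simp
  qed
  have C0ge: "real (N * 2 ^ K + K + 1) \<le> C0" "real (2 ^ K * (2 ^ K + K + 1)) \<le> C0" unfolding C0_def by simp_all
  show ?thesis
  proof (cases "useN d l")
    case True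
    have "real (\<Sum>ov\<in>(if useN d l then {None} else Some ` Vs d l). width F d (l, ov)) = real (card D * ee F l + K + 1)"
      using True unfolding width_def D_def by simp
    also have "\<dots> = real (card D) * real (ee F l) + K + 1" by simp
    also have "\<dots> \<le> real (card D) * ((1 - x) * real F + 2 ^ K) + K + 1"
      using ee_bound[OF l, of F] unfolding x_def by (intro add_right_mono mult_left_mono) auto
    also have "\<dots> = real (card D) * (1 - x) * real F + real (card D) * 2 ^ K + K + 1" by (simp add: algebra_simps)
    also have "\<dots> \<le> real (card D) * (1 - x) * real F + real (N * 2 ^ K + K + 1)"
      using cD(3) by simp
    also have "\<dots> \<le> Rfun (Ms l) (card (P l)) K' * real F + C0"
    proof -
      have "real (card D) * (1 - x) \<le> Rfun (Ms l) (card (P l)) K'"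
      proof (cases "x = 0")
        case True
        then show ?thesis using Rfun_zero[OF l, of K'] cD unfolding x_def by simp
      next
        case False
        then have "real (card (P l)) \<le> (1 - (1 - x) ^ K') / x" using True unfolding useN_def x_def K'_def by simp
        then have m: "min ((1 - (1 - x) ^ K') / x) (real (card (P l))) = real (card (P l))" by simp
        have "real (card D) * (1 - x) \<le> real (card (P l)) * (1 - x)" using cD(1) x0 by (intro mult_right_mono) auto
        also have "\<dots> \<le> Rfun (Ms l) (card (P l)) K'" using Rfun_pos[OF l, of K'] False m unfolding x_def by (simp add: mult.commute)
        finally show ?thesis .
      qed
      then have "real (card D) * (1 - x) * real F \<le> Rfun (Ms l) (card (P l)) K' * real F" by (intro mult_right_mono) auto
      then show ?thesis using C0ge(1) by linarith
    qed
    finally show ?thesis unfolding K'_def .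
  next
    case False
    then have xne: "x \<noteq> 0" and lt: "(1 - (1 - x) ^ K') / x < real (card (P l))"
      unfolding useN_def x_def K'_def by auto
    have inj: "inj_on Some (Vs d l)" by simp
    have finVs: "finite (Vs d l)" unfolding Vs_def by simp
    have "(\<Sum>ov\<in>(if useN d l then {None} else Some ` Vs d l). width F d (l, ov)) = (\<Sum>V\<in>Vs d l. smax F d l V + K + 1)"
      using False by (simp add: sum.reindex[OF inj] width_def)
    then have "real (\<Sum>ov\<in>(if useN d l then {None} else Some ` Vs d l). width F d (l, ov)) = (\<Sum>V\<in>Vs d l. real (smax F d l V) + real (K + 1))"
      by (simp add: ac_simps)
    also have "\<dots> \<le> (\<Sum>V\<in>Vs d l. wt x K V * ((1 - x) / x * real F) + real (2 ^ K + K + 1))"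
    proof (rule sum_mono)
      fix V assume "V \<in> Vs d l"
      then have "V \<in> Pow {..<K}" unfolding Vs_def by auto
      then show "real (smax F d l V) + real (K + 1) \<le> wt x K V * ((1 - x) / x * real F) + real (2 ^ K + K + 1)"
        using smax_bound[OF l _ xne[unfolded x_def], of V F d] unfolding x_def by simp
    qed
    also have "\<dots> = (\<Sum>V\<in>Vs d l. wt x K V) * ((1 - x) / x * real F) + real (card (Vs d l)) * real (2 ^ K + K + 1)"
      by (simp only: sum.distrib sum_distrib_right[symmetric] sum_constant)
    also have "\<dots> \<le> (1 - x) * ((1 - (1 - x) ^ K') / x) * real F + real (2 ^ K * (2 ^ K + K + 1))"
    proof -
      have "card (Vs d l) \<le> card (Pow {..<K})" unfolding Vs_def by (rule card_mono) auto
      then have "real (card (Vs d l)) \<le> 2 ^ K" unfolding card_Pow_lt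
        by (metis of_nat_le_iff of_nat_numeral of_nat_power)
      then have cb: "real (card (Vs d l)) * real (2 ^ K + K + 1) \<le> 2 ^ K * real (2 ^ K + K + 1)"
        by (intro mult_right_mono) auto
      have e: "(\<Sum>V\<in>Vs d l. wt x K V) = 1 - (1 - x) ^ K'" using Vs_sum[OF x0, of d l] unfolding K'_def .
      moreover have "(1 - (1 - x) ^ K') * ((1 - x) / x * real F) = (1 - x) * ((1 - (1 - x) ^ K') / x) * real F"
        by (simp add: algebra_simps)
      moreover have "real (2 ^ K * (2 ^ K + K + 1)) = 2 ^ K * real (2 ^ K + K + 1)" by (simp add: algebra_simps)
      ultimately show ?thesis unfolding e using cb by linarith
    qed
    also have "\<dots> \<le> Rfun (Ms l) (card (P l)) K' * real F + C0"
    proof -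
      have "(1 - x) * ((1 - (1 - x) ^ K') / x) \<le> Rfun (Ms l) (card (P l)) K'"
        using Rfun_pos[OF l, of K'] xne lt unfolding x_def by simp
      then have "(1 - x) * ((1 - (1 - x) ^ K') / x) * real F \<le> Rfun (Ms l) (card (P l)) K' * real F"
        by (intro mult_right_mono) auto
      then show ?thesis using C0ge(2) by linarith
    qed
    finally show ?thesis unfolding K'_def .
  qed
qed

lemma total_rate:
  "real (msg_len N F (sch F) d) \<le> (\<Sum>l<L. Rfun (Ms l) (card (P l)) (card (Sset d l)) * real F + C0)"
proof -
  have "msg_len N F (sch F) d = (\<Sum>l<L. \<Sum>ov\<in>(if useN d l then {None} else Some ` Vs d l). width F d (l, ov))"
  proof -
    have "msg_len N F (sch F) d = (\<Sum>(l, ov)\<in>blocks d. width F d (l, ov))"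
      unfolding msg_len_eq by simp
    also have "\<dots> = (\<Sum>l<L. \<Sum>ov\<in>(if useN d l then {None} else Some ` Vs d l). width F d (l, ov))"
      unfolding blocks_def by (rule sum.Sigma[symmetric]) (auto simp: Vs_def)
    finally show ?thesis .
  qed
  then have "real (msg_len N F (sch F) d) = (\<Sum>l<L. real (\<Sum>ov\<in>(if useN d l then {None} else Some ` Vs d l). width F d (l, ov)))"
    by simp
  also have "\<dots> \<le> (\<Sum>l<L. Rfun (Ms l) (card (P l)) (card (Sset d l)) * real F + C0)"
    by (rule sum_mono) (rule class_rate, simp)
  finally show ?thesis .
qed

end


lemma prob_nonneg:
  assumes p: "\<forall>n<N. p n \<ge> 0" and d: "d \<in> demand_vectors N K"
  shows "demand_prob p K d \<ge> 0"
  unfolding demand_prob_def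
proof (rule prod_nonneg)
  fix k assume "k \<in> {..<K}"
  then have "d k < N" using d unfolding demand_vectors_def by (auto simp: PiE_iff)
  then show "0 \<le> p (d k)" using p by simp
qed

lemma achievable_nonneg:
  assumes p: "\<forall>n<N. p n \<ge> 0" and a: "achievable p M N K r"
  shows "r \<ge> 0"
proof (rule ccontr)
  assume "\<not> r \<ge> 0"
  then have e: "- r / 2 > 0" by simp
  obtain F0 where "\<forall>F\<ge>F0. \<exists>S. cache_ok M N K F S \<and> (\<forall>d\<in>demand_vectors N K. err_prob N K F S d \<le> - r / 2)
         \<and> expected_rate p N K F S \<le> r + - r / 2"
    using a e unfolding achievable_def by blast
  then obtain S where S: "expected_rate p N K F0 S \<le> r + - r / 2" by blast
  have "expected_rate p N K F0 S \<ge> 0"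
    unfolding expected_rate_def
    by (rule sum_nonneg) (intro mult_nonneg_nonneg prob_nonneg[OF p]; simp)
  then show False using S \<open>\<not> r \<ge> 0\<close> by linarith
qed

lemma exp_R_class_nonneg:
  assumes p: "\<forall>n<N. p n \<ge> 0" and M: "Ml \<ge> 0"
  shows "exp_R_class p N K A Ml \<ge> 0"
  unfolding exp_R_class_def
  by (rule sum_nonneg) (intro mult_nonneg_nonneg prob_nonneg[OF p] Rfun_nonneg[OF M]; simp)

context cc begin

lemma exp_bound:
  assumes p: "\<forall>n<N. p n \<ge> 0" and F: "F > 0"
  shows "expected_rate p N K F (sch F) \<le> (\<Sum>l<L. exp_R_class p N K (P l) (Ms l))
            + real L * C0 / real F * (\<Sum>d\<in>demand_vectors N K. demand_prob p K d)"
proof -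
  define Z where "Z = (\<Sum>d\<in>demand_vectors N K. demand_prob p K d)"
  define R where "R d = (\<Sum>l<L. Rfun (Ms l) (card (P l)) (card (Sset d l)))" for d
  have rate: "real (msg_len N F (sch F) d) / real F \<le> R d + real L * C0 / real F" for d
  proof -
    have "real (msg_len N F (sch F) d) \<le> (\<Sum>l<L. Rfun (Ms l) (card (P l)) (card (Sset d l)) * real F + C0)"
      by (rule total_rate)
    also have "\<dots> = R d * real F + real L * C0" unfolding R_def by (simp add: sum.distrib sum_distrib_right)
    finally have "real (msg_len N F (sch F) d) \<le> R d * real F + real L * C0" .
    then have "real (msg_len N F (sch F) d) / real F \<le> (R d * real F + real L * C0) / real F"
      using F by (intro divide_right_mono) auto
    also have "\<dots> = R d + real L * C0 / real F" using F by (simp add: field_simps)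
    finally show ?thesis .
  qed
  have "expected_rate p N K F (sch F) \<le> (\<Sum>d\<in>demand_vectors N K. demand_prob p K d * (R d + real L * C0 / real F))"
    unfolding expected_rate_def
    by (rule sum_mono) (rule mult_left_mono[OF rate prob_nonneg[OF p]])
  also have "\<dots> = (\<Sum>d\<in>demand_vectors N K. demand_prob p K d * R d) + (\<Sum>d\<in>demand_vectors N K. demand_prob p K d * (real L * C0 / real F))"
    by (simp add: distrib_left sum.distrib)
  also have "(\<Sum>d\<in>demand_vectors N K. demand_prob p K d * (real L * C0 / real F)) = real L * C0 / real F * Z"
    unfolding Z_def by (simp only: sum_distrib_right[symmetric] mult.commute)
  also have "(\<Sum>d\<in>demand_vectors N K. demand_prob p K d * R d) = (\<Sum>l<L. exp_R_class p N K (P l) (Ms l))"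
    unfolding R_def exp_R_class_def Sset_def by (simp add: sum_distrib_left sum.swap[of _ "{..<L}"])
  finally show ?thesis unfolding Z_def .
qed

lemma achievable:
  assumes p: "\<forall>n<N. p n \<ge> 0" and M: "(\<Sum>l<L. Ms l) = M"
  shows "achievable p M N K (\<Sum>l<L. exp_R_class p N K (P l) (Ms l))"
  unfolding achievable_def
proof (intro allI impI)
  fix \<epsilon> :: real assume e: "\<epsilon> > 0"
  define Z where "Z = (\<Sum>d\<in>demand_vectors N K. demand_prob p K d)"
  have Z0: "Z \<ge> 0" unfolding Z_def by (rule sum_nonneg) (rule prob_nonneg[OF p])
  have C00: "C0 \<ge> 0" unfolding C0_def by simp
  define c where "c = real L * C0 * Z"
  have c0: "c \<ge> 0" unfolding c_def using Z0 C00 by simp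
  define F0 where "F0 = nat \<lceil>c / \<epsilon>\<rceil> + 1"
  show "\<exists>F0. \<forall>F\<ge>F0. \<exists>S. cache_ok M N K F S \<and> (\<forall>d\<in>demand_vectors N K. err_prob N K F S d \<le> \<epsilon>) \<and>
          expected_rate p N K F S \<le> (\<Sum>l<L. exp_R_class p N K (P l) (Ms l)) + \<epsilon>"
  proof (intro exI[of _ F0] allI impI)
    fix F assume F: "F0 \<le> F"
    have Fpos: "F > 0" using F unfolding F0_def by simp
    have "c / \<epsilon> \<le> real F"
    proof -
      have a: "c / \<epsilon> \<le> real (nat \<lceil>c / \<epsilon>\<rceil>)" by (rule real_nat_ceiling_ge)
      have "nat \<lceil>c / \<epsilon>\<rceil> \<le> F" using F unfolding F0_def by linarith
      then have "real (nat \<lceil>c / \<epsilon>\<rceil>) \<le> real F" by (rule of_nat_mono)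
      with a show ?thesis by linarith
    qed
    then have "c \<le> \<epsilon> * real F" using e by (simp add: field_simps)
    then have cF: "c / real F \<le> \<epsilon>" using Fpos by (simp add: field_simps)
    show "\<exists>S. cache_ok M N K F S \<and> (\<forall>d\<in>demand_vectors N K. err_prob N K F S d \<le> \<epsilon>) \<and>
          expected_rate p N K F S \<le> (\<Sum>l<L. exp_R_class p N K (P l) (Ms l)) + \<epsilon>"
    proof (intro exI[of _ "sch F"] conjI ballI)
      show "cache_ok M N K F (sch F)" by (rule cache_ok[OF M])
      fix d assume "d \<in> demand_vectors N K"
      then show "err_prob N K F (sch F) d \<le> \<epsilon>" using err_zero e by simp
    next
      have "expected_rate p N K F (sch F) \<le> (\<Sum>l<L. exp_R_class p N K (P l) (Ms l)) + real L * C0 / real F * Z"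
        using exp_bound[OF p Fpos] unfolding Z_def .
      also have "real L * C0 / real F * Z = c / real F" unfolding c_def by simp
      finally show "expected_rate p N K F (sch F) \<le> (\<Sum>l<L. exp_R_class p N K (P l) (Ms l)) + \<epsilon>"
        using cF by linarith
    qed
  qed
qed

end

theorem theorem1:
  fixes N K L :: nat and M :: real and p :: "nat \<Rightarrow> real" and P :: "nat \<Rightarrow> nat set"
  assumes "N \<ge> 1"
    and "M \<ge> 0"
    and "\<forall>n<N. p n \<ge> 0" and "(\<Sum>n<N. p n) = 1"
    and "\<forall>l<L. P l \<noteq> {}"
    and "\<forall>l<L. \<forall>l'<L. l \<noteq> l' \<longrightarrow> P l \<inter> P l' = {}"
    and "(\<Union>l<L. P l) = {..<N}"
  shows "R_star p M N K
           \<le> Inf ((\<lambda>Ms. \<Sum>l<L. exp_R_class p N K (P l) (Ms l))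
                   ` {Ms. (\<forall>l<L. Ms l \<ge> 0) \<and> (\<Sum>l<L. Ms l) = M})
       \<and> Inf ((\<lambda>Ms. \<Sum>l<L. exp_R_class p N K (P l) (Ms l))
                   ` {Ms. (\<forall>l<L. Ms l \<ge> 0) \<and> (\<Sum>l<L. Ms l) = M})
           \<le> (\<Sum>l<L. exp_R_class p N K (P l) (M / real L))"
proof -
  define SS where "SS = {Ms. (\<forall>l<L. Ms l \<ge> 0) \<and> (\<Sum>l<L. Ms l) = M}"
  define f where "f Ms = (\<Sum>l<L. exp_R_class p N K (P l) (Ms l))" for Ms :: "nat \<Rightarrow> real"
  have L0: "L > 0"
  proof (rule ccontr)
    assume "\<not> L > 0" then have "L = 0" by simp
    then have "{..<N} = {}" using assms(7) by simp
    moreover have "0 \<in> {..<N}" using assms(1) by simp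
    ultimately show False by blast
  qed
  have mem: "(\<lambda>_. M / real L) \<in> SS" unfolding SS_def using assms(2) L0 by simp
  have ne: "f ` SS \<noteq> {}" using mem by blast
  have bdd: "bdd_below (f ` SS)"
  proof (rule bdd_belowI)
    fix v assume "v \<in> f ` SS"
    then obtain Ms where "Ms \<in> SS" "v = f Ms" by auto
    then show "0 \<le> v" unfolding f_def SS_def
      by (auto intro!: sum_nonneg exp_R_class_nonneg[OF assms(3)])
  qed
  have bddA: "bdd_below {r. achievable p M N K r}"
    by (rule bdd_belowI[of _ 0]) (auto intro: achievable_nonneg[OF assms(3)])
  have part1: "R_star p M N K \<le> Inf (f ` SS)"
  proof (rule cInf_greatest[OF ne])
    fix v assume "v \<in> f ` SS"
    then obtain Ms where Ms: "Ms \<in> SS" "v = f Ms" by auto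
    interpret cc N K L P Ms
      using assms(1,5,6,7) Ms(1) unfolding SS_def by unfold_locales auto
    have "achievable p M N K (f Ms)" unfolding f_def
      by (rule achievable[OF assms(3)]) (use Ms(1) in \<open>simp add: SS_def\<close>)
    then show "R_star p M N K \<le> v" unfolding R_star_def Ms(2)
      by (intro cInf_lower bddA) simp
  qed
  have part2: "Inf (f ` SS) \<le> f (\<lambda>_. M / real L)"
    by (rule cInf_lower[OF _ bdd]) (use mem in blast)
  show ?thesis using part1 part2 unfolding f_def SS_def by simp
qed

end
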